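(* Let $K$ be a Cantor set, let $T:K\to K$ be a homeomorphism, and let $K_1,\dots,K_N$ be pairwise disjoint Cantor sets with $K=\bigcup_{i=1}^N K_i$. Then there exists a homeomorphism $\widetilde T:K\to K$ such that for every $x\in K$ and every $1\le i\le N$, $\widetilde T(x)\in K_i$ if and only if $T(x)\in K_i$, and for every $x\in K$ the $\omega$-limit set of $x$ under $\widetilde T$ is a periodic orbit.
   Context: A Cantor set is a nonempty totally disconnected, perfect, compact metric space. *)

theory Defs
  imports "HOL-Analysis.Analysis"
begin

definition cantor_set :: "'a::metric_space set \<Rightarrow> bool" where
  "cantor_set S \<longleftrightarrow> S \<noteq> {} \<and> compact S \<and> (\<forall>x\<in>S. x islimpt S)
     \<and> (\<forall>C. C \<subseteq> S \<and> connected C \<longrightarrow> (\<exists>a. C \<subseteq> {a}))"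

definition omega_limit_set :: "('a::metric_space \<Rightarrow> 'a) \<Rightarrow> 'a \<Rightarrow> 'a set" where
  "omega_limit_set f x = {y. \<forall>e>0. \<forall>M. \<exists>n\<ge>M. dist ((f ^^ n) x) y < e}"

definition periodic_orbit :: "('a \<Rightarrow> 'a) \<Rightarrow> 'a set \<Rightarrow> bool" where
  "periodic_orbit f A \<longleftrightarrow> (\<exists>p k. k > 0 \<and> (f ^^ k) p = p \<and> A = {(f ^^ n) p | n. True})"

end

theory Submission
  imports Defs "HOL-Library.Countable"
begin

definition clopen_in :: "'a::metric_space set \<Rightarrow> 'a set \<Rightarrow> bool" where
  "clopen_in X U \<longleftrightarrow> U \<subseteq> X \<and> compact U \<and> compact (X - U)"

definition tdisc :: "'a::metric_space set \<Rightarrow> bool" where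
  "tdisc S \<longleftrightarrow> (\<forall>C. C \<subseteq> S \<and> connected C \<longrightarrow> (\<exists>a. C \<subseteq> {a}))"

lemma sep_clopen:
  fixes X :: "'a::metric_space set"
  assumes X: "compact X" "tdisc X" and x: "x \<in> X" and C: "compact C" "C \<subseteq> X" "x \<notin> C"
  shows "\<exists>W. clopen_in X W \<and> x \<in> W \<and> W \<inter> C = {}"
proof -
  have "separated_between (top_of_set X) {x} C"
  proof (rule cut_wire_fence_theorem)
    show "compact_space (top_of_set X)" using X by (simp add: compact_space_subtopology)
    show "Hausdorff_space (top_of_set X)" by (simp add: Hausdorff_space_subtopology)
    show "closedin (top_of_set X) {x}" using x by (simp add: closedin_subset_trans)
    show "closedin (top_of_set X) C" using C by (simp add: closed_subset compact_imp_closed)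
    fix D assume "connectedin (top_of_set X) D"
    then have "D \<subseteq> X" "connected D" by (auto simp: connectedin_subtopology)
    then obtain a where "D \<subseteq> {a}" using X(2) unfolding tdisc_def by blast
    then show "disjnt D {x} \<or> disjnt D C" using C(3) by (auto simp: disjnt_def)
  qed
  then obtain U V where UV: "openin (top_of_set X) U" "openin (top_of_set X) V" "U \<union> V = X"
     "disjnt U V" "{x} \<subseteq> U" "C \<subseteq> V"
    unfolding separated_between_def by auto
  have "X - U = V" using UV(3,4) openin_subset[OF UV(1)] openin_subset[OF UV(2)] by (auto simp: disjnt_def)
  have XV: "X - V = U" using UV(3,4) openin_subset[OF UV(1)] openin_subset[OF UV(2)] by (auto simp: disjnt_def)
  have cU: "closedin (top_of_set X) U" using UV \<open>X - U = V\<close> openin_subset[OF UV(1)]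
    unfolding closedin_def by simp
  have cV: "closedin (top_of_set X) V" using UV XV openin_subset[OF UV(2)]
    unfolding closedin_def by simp
  have "compact U" using cU X(1) by (meson closedin_compact closedin_closed_trans compact_imp_closed closed_Int_compact closedin_closed)
  moreover have "compact V" using cV X(1) by (meson closedin_compact closedin_closed_trans compact_imp_closed closed_Int_compact closedin_closed)
  ultimately have "clopen_in X U" using \<open>X - U = V\<close> openin_subset[OF UV(1)]
    by (auto simp: clopen_in_def)
  moreover have "U \<inter> C = {}" using UV(4,6) by (auto simp: disjnt_def)
  ultimately show ?thesis using UV(5) by blast
qed

lemma clopen_in_trans: "clopen_in X U \<Longrightarrow> clopen_in U W \<Longrightarrow> clopen_in X W"
  unfolding clopen_in_def
proof (intro conjI)
  assume a: "U \<subseteq> X \<and> compact U \<and> compact (X - U)" "W \<subseteq> U \<and> compact W \<and> compact (U - W)"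
  have "X - W = (X - U) \<union> (U - W)" using a by auto
  then show "compact (X - W)" using a by (simp add: compact_Un)
qed auto

lemma clopen_in_Int: "clopen_in X U \<Longrightarrow> clopen_in X V \<Longrightarrow> clopen_in X (U \<inter> V)"
proof -
  assume a: "clopen_in X U" "clopen_in X V"
  have "X - (U \<inter> V) = (X - U) \<union> (X - V)" by auto
  then show ?thesis using a unfolding clopen_in_def by (auto simp: compact_Un compact_Int)
qed

lemma clopen_in_Diff: "clopen_in X U \<Longrightarrow> clopen_in X V \<Longrightarrow> clopen_in X (U - V)"
proof -
  assume a: "clopen_in X U" "clopen_in X V"
  have "clopen_in X (X - V)" using a(2) unfolding clopen_in_def
    by (auto simp: Diff_Diff_Int inf.absorb2)
  moreover have "U - V = U \<inter> (X - V)" using a(1) by (auto simp: clopen_in_def)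
  ultimately show ?thesis using a(1) clopen_in_Int by metis
qed

lemma clopen_in_open: "clopen_in X U \<Longrightarrow> \<exists>Ob. open Ob \<and> U = X \<inter> Ob"
proof -
  assume a: "clopen_in X U"
  then have "open (- (X - U))" unfolding clopen_in_def by (intro open_Compl compact_imp_closed) auto
  moreover have "U = X \<inter> (- (X - U))" using a by (auto simp: clopen_in_def)
  ultimately show ?thesis by blast
qed

lemma tdisc_subset: "tdisc X \<Longrightarrow> U \<subseteq> X \<Longrightarrow> tdisc U"
  unfolding tdisc_def by blast

definition small :: "real \<Rightarrow> 'a::metric_space set \<Rightarrow> bool" where
  "small e W \<longleftrightarrow> (\<forall>x\<in>W. \<forall>y\<in>W. dist x y < e)"

lemma fine_partition:
  fixes X :: "'a::metric_space set"
  assumes X: "compact X" "tdisc X" and U: "clopen_in X U" and e: "e > 0"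
  shows "\<exists>P. finite P \<and> (\<forall>W\<in>P. W \<noteq> {} \<and> clopen_in X W \<and> small e W) \<and> disjoint P \<and> \<Union>P = U"
proof -
  have cU: "compact U" and tU: "tdisc U" and UX: "U \<subseteq> X"
    using U X tdisc_subset by (auto simp: clopen_in_def)
  have "\<forall>x\<in>U. \<exists>W. clopen_in U W \<and> x \<in> W \<and> W \<inter> (U - ball x (e/3)) = {}"
  proof
    fix x assume x: "x \<in> U"
    have "compact (U - ball x (e/3))" using cU
      by (simp add: Diff_eq compact_Int_closed closed_Compl open_ball)
    then show "\<exists>W. clopen_in U W \<and> x \<in> W \<and> W \<inter> (U - ball x (e/3)) = {}"
      using sep_clopen[OF cU tU x] e by auto
  qed
  then obtain Wf where Wf: "\<And>x. x \<in> U \<Longrightarrow> clopen_in U (Wf x) \<and> x \<in> Wf x \<and> Wf x \<inter> (U - ball x (e/3)) = {}"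
    by metis
  have WfU: "\<And>x. x \<in> U \<Longrightarrow> Wf x \<subseteq> U" using Wf by (auto simp: clopen_in_def)
  have Wfb: "\<And>x. x \<in> U \<Longrightarrow> Wf x \<subseteq> ball x (e/3)" using Wf WfU by blast
  have opn: "\<And>x. x \<in> U \<Longrightarrow> open (- (U - Wf x))" using Wf
    unfolding clopen_in_def by (intro open_Compl compact_imp_closed) auto
  have "U \<subseteq> \<Union>((\<lambda>x. - (U - Wf x)) ` U)" using Wf by blast
  then obtain F where F: "F \<subseteq> U" "finite F" "U \<subseteq> \<Union>((\<lambda>x. - (U - Wf x)) ` F)"
    using compactE_image[OF cU, of U "\<lambda>x. - (U - Wf x)"] opn by metis
  have cov: "\<And>y. y \<in> U \<Longrightarrow> \<exists>z\<in>F. y \<in> Wf z" using F(3) by blast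
  define atom where "atom x = {y\<in>U. \<forall>z\<in>F. y \<in> Wf z \<longleftrightarrow> x \<in> Wf z}" for x
  define P where "P = atom ` U"
  have "P \<subseteq> (\<lambda>S. {y\<in>U. \<forall>z\<in>F. y \<in> Wf z \<longleftrightarrow> z \<in> S}) ` Pow F"
    unfolding P_def atom_def by (auto intro!: image_eqI[where x="{z\<in>F. _ \<in> Wf z}"])
  then have finP: "finite P" using F(2) by (meson finite_Pow_iff finite_imageI finite_subset)
  have clo: "clopen_in U (atom x)" if x: "x \<in> U" for x
  proof -
    define g where "g z = (if x \<in> Wf z then Wf z else U - Wf z)" for z
    define h where "h z = (if x \<in> Wf z then U - Wf z else Wf z)" for z
    have cg: "compact (g z)" if "z \<in> F" for z
      using Wf[of z] that F(1) by (auto simp: g_def clopen_in_def Diff_Diff_Int inf.absorb2 WfU)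
    have ch: "compact (h z)" if "z \<in> F" for z
      using Wf[of z] that F(1) by (auto simp: h_def clopen_in_def Diff_Diff_Int inf.absorb2 WfU)
    have e1: "atom x = U \<inter> \<Inter>(g ` F)"
    proof (rule set_eqI, rule iffI)
      fix y assume "y \<in> U \<inter> \<Inter>(g ` F)"
      then have "y \<in> U" "\<And>z. z \<in> F \<Longrightarrow> y \<in> g z" by auto
      then show "y \<in> atom x" unfolding atom_def g_def
        by (smt (verit) Diff_iff mem_Collect_eq)
    next
      fix y assume y: "y \<in> atom x"
      show "y \<in> U \<inter> \<Inter>(g ` F)"
      proof (intro IntI InterI)
        show "y \<in> U" using y by (simp add: atom_def)
        fix S assume "S \<in> g ` F"
        then obtain z where z: "z \<in> F" "S = g z" by blast
        show "y \<in> S" using y z unfolding atom_def g_def by (cases "x \<in> Wf z") auto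
      qed
    qed
    have e2: "U - atom x = \<Union>(h ` F)" unfolding atom_def h_def using WfU F(1) by auto
    have "compact (atom x)" unfolding e1
      using cg by (intro compact_Int_closed[OF cU] closed_INT) (auto intro: compact_imp_closed)
    moreover have "compact (U - atom x)" unfolding e2 using ch F(2) by (auto intro: compact_UN)
    ultimately show ?thesis by (auto simp: clopen_in_def atom_def)
  qed
  show ?thesis
  proof (intro exI conjI ballI)
    show "finite P" by (fact finP)
    fix W assume "W \<in> P"
    then obtain x where x: "x \<in> U" "W = atom x" unfolding P_def by auto
    show "W \<noteq> {}" using x by (auto simp: atom_def)
    show "clopen_in X W" using clo x U clopen_in_trans by blast
    obtain z where z: "z \<in> F" "x \<in> Wf z" using cov x by blast
    have "W \<subseteq> ball z (e/3)" using x z Wfb[of z] F(1) unfolding atom_def by auto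
    then show "small e W" unfolding small_def
    proof (intro ballI)
      fix a b assume "W \<subseteq> ball z (e/3)" "a \<in> W" "b \<in> W"
      then have "dist z a < e/3" "dist z b < e/3" by auto
      then show "dist a b < e" using dist_triangle[of a b z] e by (simp add: dist_commute)
    qed
  next
    show "disjoint P" unfolding P_def disjoint_def atom_def by (auto simp: disjnt_def)
    show "\<Union>P = U" unfolding P_def atom_def by auto
  qed
qed

definition perfect_set :: "'a::metric_space set \<Rightarrow> bool" where
  "perfect_set X \<longleftrightarrow> (\<forall>x\<in>X. x islimpt X)"

lemma split_clopen:
  fixes X :: "'a::metric_space set"
  assumes X: "compact X" "tdisc X" "perfect_set X" and U: "clopen_in X U" "U \<noteq> {}"
  shows "\<exists>U1 U2. clopen_in X U1 \<and> clopen_in X U2 \<and> U1 \<noteq> {} \<and> U2 \<noteq> {} \<and> U1 \<inter> U2 = {} \<and> U1 \<union> U2 = U"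
proof -
  obtain x where x: "x \<in> U" using U by auto
  obtain Ob where Ob: "open Ob" "U = X \<inter> Ob" using clopen_in_open[OF U(1)] by auto
  have "x islimpt X" using X(3) x U(1) by (auto simp: perfect_set_def clopen_in_def)
  then obtain y where y: "y \<in> X" "y \<in> Ob" "y \<noteq> x" using Ob x by (meson IntE islimptE)
  have yU: "y \<in> U" using y Ob by auto
  obtain W where W: "clopen_in X W" "x \<in> W" "W \<inter> {y} = {}"
    using sep_clopen[OF X(1,2), of x "{y}"] x y U(1) by (auto simp: clopen_in_def)
  show ?thesis
  proof (intro exI conjI)
    show "clopen_in X (U \<inter> W)" using U W clopen_in_Int by blast
    show "clopen_in X (U - W)" using U W clopen_in_Diff by blast
    show "U \<inter> W \<noteq> {}" using x W by auto
    show "U - W \<noteq> {}" using yU W by auto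
  qed auto
qed

definition part :: "'a::metric_space set \<Rightarrow> real \<Rightarrow> 'a set \<Rightarrow> 'a set set \<Rightarrow> bool" where
  "part X e U P \<longleftrightarrow> finite P \<and> (\<forall>W\<in>P. W \<noteq> {} \<and> clopen_in X W \<and> small e W) \<and> disjoint P \<and> \<Union>P = U"

lemma small_subset: "small e W \<Longrightarrow> V \<subseteq> W \<Longrightarrow> small e V"
  unfolding small_def by blast

lemma grow_part:
  fixes X :: "'a::metric_space set"
  assumes X: "compact X" "tdisc X" "perfect_set X" and P: "part X e U P" "P \<noteq> {}"
  shows "\<exists>P'. part X e U P' \<and> card P' = card P + d"
proof (induction d)
  case 0
  then show ?case using P by auto
next
  case (Suc d)
  then obtain P' where P': "part X e U P'" "card P' = card P + d" by auto
  have "card P > 0" using P by (auto simp: part_def card_gt_0_iff)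
  then have "P' \<noteq> {}" using P' by auto
  then obtain W where W: "W \<in> P'" by auto
  have Wc: "W \<noteq> {}" "clopen_in X W" "small e W" using P'(1) W by (auto simp: part_def)
  obtain U1 U2 where U12: "clopen_in X U1" "clopen_in X U2" "U1 \<noteq> {}" "U2 \<noteq> {}" "U1 \<inter> U2 = {}" "U1 \<union> U2 = W"
    using split_clopen[OF X Wc(2,1)] by blast
  define P'' where "P'' = insert U1 (insert U2 (P' - {W}))"
  have fin: "finite P'" using P' by (auto simp: part_def)
  have dis: "\<And>A. A \<in> P' \<Longrightarrow> A \<noteq> W \<Longrightarrow> A \<inter> W = {}" using P'(1) W
    by (auto simp: part_def disjoint_def disjnt_def)
  have n1: "U1 \<notin> P' - {W}" using dis U12 by blast
  have n2: "U2 \<notin> P' - {W}" using dis U12 by blast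
  have "U1 \<noteq> U2" using U12 by auto
  then have "card P'' = card (P' - {W}) + 2" unfolding P''_def using n1 n2 fin by auto
  also have "\<dots> = card P' + 1"
  proof -
    have "card P' > 0" using W fin card_gt_0_iff by blast
    then show ?thesis using W fin by (simp add: card_Diff_singleton_if)
  qed
  finally have cP'': "card P'' = card P + Suc d" using P'(2) by simp
  have "part X e U P''"
    unfolding part_def
  proof (intro conjI)
    show "finite P''" using fin by (simp add: P''_def)
    show "\<forall>A\<in>P''. A \<noteq> {} \<and> clopen_in X A \<and> small e A"
      using U12 Wc P'(1) small_subset[OF Wc(3)] unfolding P''_def part_def by auto
  next
    show "disjoint P''" unfolding disjoint_def disjnt_def P''_def
      using U12 dis P'(1) by (auto simp: part_def disjoint_def disjnt_def)
    show "\<Union>P'' = U" using P'(1) U12 W unfolding P''_def part_def by auto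
  qed
  then show ?case using cP'' by blast
qed

lemma fine_part:
  fixes X :: "'a::metric_space set"
  assumes X: "compact X" "tdisc X" and U: "clopen_in X U" "U \<noteq> {}" and e: "e > 0"
  shows "\<exists>P. part X e U P \<and> P \<noteq> {}"
  using fine_partition[OF X U(1) e] U(2) unfolding part_def by auto

definition cset :: "'a::metric_space set \<Rightarrow> bool" where
  "cset X \<longleftrightarrow> compact X \<and> tdisc X \<and> perfect_set X"

definition locref where
  "locref X Y e U V Q \<longleftrightarrow> finite Q \<and>
     (\<forall>p\<in>Q. fst p \<noteq> {} \<and> snd p \<noteq> {} \<and> clopen_in X (fst p) \<and> clopen_in Y (snd p) \<and> small e (fst p) \<and> small e (snd p))
     \<and> (\<forall>p\<in>Q. \<forall>q\<in>Q. p \<noteq> q \<longrightarrow> fst p \<inter> fst q = {} \<and> snd p \<inter> snd q = {})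
     \<and> \<Union>(fst ` Q) = U \<and> \<Union>(snd ` Q) = V"

lemma local_ref:
  fixes X :: "'a::metric_space set" and Y :: "'b::metric_space set"
  assumes X: "cset X" and Y: "cset Y" and U: "clopen_in X U" "U \<noteq> {}"
    and V: "clopen_in Y V" "V \<noteq> {}" and e: "e > 0"
  shows "\<exists>Q. locref X Y e U V Q"
proof -
  obtain PU where PU: "part X e U PU" "PU \<noteq> {}" using fine_part[OF _ _ U e] X by (auto simp: cset_def)
  obtain PV where PV: "part Y e V PV" "PV \<noteq> {}" using fine_part[OF _ _ V e] Y by (auto simp: cset_def)
  obtain PU' where PU': "part X e U PU'" "card PU' = card PU + card PV"
    using grow_part[OF _ _ _ PU, of "card PV"] X by (auto simp: cset_def)
  obtain PV' where PV': "part Y e V PV'" "card PV' = card PV + card PU"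
    using grow_part[OF _ _ _ PV, of "card PU"] Y by (auto simp: cset_def)
  have "card PU' = card PV'" using PU' PV' by simp
  moreover have "finite PU'" "finite PV'" using PU' PV' by (auto simp: part_def)
  ultimately obtain b where b: "bij_betw b PU' PV'" using finite_same_card_bij by blast
  define Q where "Q = (\<lambda>A. (A, b A)) ` PU'"
  show ?thesis unfolding locref_def
  proof (rule exI[of _ Q], intro conjI)
    show "finite Q" using \<open>finite PU'\<close> by (simp add: Q_def)
    show "\<forall>p\<in>Q. fst p \<noteq> {} \<and> snd p \<noteq> {} \<and> clopen_in X (fst p) \<and> clopen_in Y (snd p) \<and> small e (fst p) \<and> small e (snd p)"
    proof
      fix p assume "p \<in> Q"
      then obtain A where A: "A \<in> PU'" "p = (A, b A)" by (auto simp: Q_def)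
      have bA: "b A \<in> PV'" using b A by (auto simp: bij_betw_def)
      show "fst p \<noteq> {} \<and> snd p \<noteq> {} \<and> clopen_in X (fst p) \<and> clopen_in Y (snd p) \<and> small e (fst p) \<and> small e (snd p)"
        using A bA PU'(1) PV'(1) by (auto simp: part_def)
    qed
    show "\<forall>p\<in>Q. \<forall>q\<in>Q. p \<noteq> q \<longrightarrow> fst p \<inter> fst q = {} \<and> snd p \<inter> snd q = {}"
    proof (intro ballI impI)
    fix p assume "p \<in> Q"
    then obtain A where A: "A \<in> PU'" "p = (A, b A)" by (auto simp: Q_def)
    have bA: "b A \<in> PV'" using b A by (auto simp: bij_betw_def)
    fix q assume "q \<in> Q" "p \<noteq> q"
    then obtain A' where A': "A' \<in> PU'" "q = (A', b A')" by (auto simp: Q_def)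
    have "A \<noteq> A'" using A A' \<open>p \<noteq> q\<close> by auto
    then have "b A \<noteq> b A'" using b A A' by (auto simp: bij_betw_def inj_on_def)
    moreover have "b A' \<in> PV'" using b A' by (auto simp: bij_betw_def)
    ultimately show "fst p \<inter> fst q = {} \<and> snd p \<inter> snd q = {}"
      using A A' bA \<open>A \<noteq> A'\<close> PU'(1) PV'(1) by (auto simp: part_def disjoint_def disjnt_def)
    qed
  next
    show "\<Union>(fst ` Q) = U" using PU'(1) by (auto simp: Q_def part_def)
    have "b ` PU' = PV'" using b by (auto simp: bij_betw_def)
    then show "\<Union>(snd ` Q) = V" using PV'(1) by (auto simp: Q_def part_def)
  qed
qed

definition stage :: "'a::metric_space set \<Rightarrow> 'b::metric_space set \<Rightarrow> ('a set \<times> 'b set) set \<Rightarrow> bool" where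
  "stage X Y S \<longleftrightarrow> finite S \<and>
     (\<forall>p\<in>S. fst p \<noteq> {} \<and> snd p \<noteq> {} \<and> clopen_in X (fst p) \<and> clopen_in Y (snd p))
     \<and> (\<forall>p\<in>S. \<forall>q\<in>S. p \<noteq> q \<longrightarrow> fst p \<inter> fst q = {} \<and> snd p \<inter> snd q = {})
     \<and> \<Union>(fst ` S) = X \<and> \<Union>(snd ` S) = Y"

definition refines where
  "refines X Y e S S' \<longleftrightarrow> stage X Y S' \<and> (\<forall>p'\<in>S'. \<exists>p\<in>S. fst p' \<subseteq> fst p \<and> snd p' \<subseteq> snd p)
     \<and> (\<forall>p'\<in>S'. small e (fst p') \<and> small e (snd p'))"

lemma refine_step:
  fixes X :: "'a::metric_space set" and Y :: "'b::metric_space set"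
  assumes X: "cset X" and Y: "cset Y" and S: "stage X Y S" and e: "e > 0"
  shows "\<exists>S'. refines X Y e S S'"
proof -
  have "\<forall>p\<in>S. \<exists>Q. locref X Y e (fst p) (snd p) Q"
    using S local_ref[OF X Y _ _ _ _ e] by (auto simp: stage_def)
  then obtain Qf where Qf: "\<And>p. p \<in> S \<Longrightarrow> locref X Y e (fst p) (snd p) (Qf p)" by metis
  define S' where "S' = \<Union>(Qf ` S)"
  have par: "\<forall>p'\<in>S'. \<exists>p\<in>S. p' \<in> Qf p" by (auto simp: S'_def)
  have sub: "\<And>p p'. p \<in> S \<Longrightarrow> p' \<in> Qf p \<Longrightarrow> fst p' \<subseteq> fst p \<and> snd p' \<subseteq> snd p"
    using Qf unfolding locref_def by blast
  have "stage X Y S'" unfolding stage_def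
  proof (intro conjI)
    show "finite S'" using S Qf by (auto simp: S'_def stage_def locref_def)
    show "\<forall>p\<in>S'. fst p \<noteq> {} \<and> snd p \<noteq> {} \<and> clopen_in X (fst p) \<and> clopen_in Y (snd p)"
      using Qf by (auto simp: S'_def locref_def)
    show "\<forall>p\<in>S'. \<forall>q\<in>S'. p \<noteq> q \<longrightarrow> fst p \<inter> fst q = {} \<and> snd p \<inter> snd q = {}"
    proof (intro ballI impI)
      fix p' q' assume p': "p' \<in> S'" and q': "q' \<in> S'" and ne: "p' \<noteq> q'"
      then obtain p q where pq: "p \<in> S" "p' \<in> Qf p" "q \<in> S" "q' \<in> Qf q" by (auto simp: S'_def)
      show "fst p' \<inter> fst q' = {} \<and> snd p' \<inter> snd q' = {}"
      proof (cases "p = q")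
        case True
        then show ?thesis using Qf[OF pq(1)] pq ne unfolding locref_def by blast
      next
        case False
        then have "fst p \<inter> fst q = {} \<and> snd p \<inter> snd q = {}" using S pq by (auto simp: stage_def)
        then show ?thesis using sub[OF pq(1,2)] sub[OF pq(3,4)] by blast
      qed
    qed
    show "\<Union>(fst ` S') = X"
    proof -
      have "\<Union>(fst ` S') = (\<Union>p\<in>S. \<Union>(fst ` Qf p))" by (auto simp: S'_def)
      also have "\<dots> = (\<Union>p\<in>S. fst p)" using Qf by (auto simp: locref_def)
      finally show ?thesis using S by (simp add: stage_def)
    qed
    show "\<Union>(snd ` S') = Y"
    proof -
      have "\<Union>(snd ` S') = (\<Union>p\<in>S. \<Union>(snd ` Qf p))" by (auto simp: S'_def)
      also have "\<dots> = (\<Union>p\<in>S. snd p)" using Qf by (auto simp: locref_def)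
      finally show ?thesis using S by (simp add: stage_def)
    qed
  qed
  moreover have "\<forall>p'\<in>S'. \<exists>p\<in>S. fst p' \<subseteq> fst p \<and> snd p' \<subseteq> snd p" using par sub by blast
  moreover have "\<forall>p'\<in>S'. small e (fst p') \<and> small e (snd p')" using Qf by (auto simp: S'_def locref_def)
  ultimately show ?thesis unfolding refines_def by blast
qed

lemma small_dist_zero:
  fixes a b :: "'a::metric_space"
  assumes "\<And>n. dist a b < inverse (real (Suc n))"
  shows "a = b"
proof (rule ccontr)
  assume "a \<noteq> b"
  then have "dist a b > 0" by simp
  then obtain n where "inverse (real (Suc n)) < dist a b" using reals_Archimedean by blast
  then show False using assms[of n] by simp
qed

lemma limit_map:
  fixes X :: "'a::metric_space set" and Y :: "'b::metric_space set"
  assumes H1: "\<And>n. stage X Y (Sq n)"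
    and H2: "\<And>n. \<forall>p'\<in>Sq (Suc n). \<exists>p\<in>Sq n. fst p' \<subseteq> fst p \<and> snd p' \<subseteq> snd p"
    and H3: "\<And>n. \<forall>p\<in>Sq (Suc n). small (inverse (real (Suc n))) (fst p) \<and> small (inverse (real (Suc n))) (snd p)"
  shows "\<exists>h. (\<forall>n. \<forall>p\<in>Sq n. \<forall>x\<in>fst p. h x \<in> snd p) \<and> continuous_on X h \<and> h ` X \<subseteq> Y"
proof -
  have ex1: "\<exists>!p. p \<in> Sq n \<and> x \<in> fst p" if "x \<in> X" for x n
  proof -
    have "x \<in> \<Union>(fst ` Sq n)" using H1[of n] that by (simp add: stage_def)
    then obtain p where "p \<in> Sq n" "x \<in> fst p" by blast
    moreover have "\<And>q. q \<in> Sq n \<Longrightarrow> x \<in> fst q \<Longrightarrow> q = p"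
      using H1[of n] calculation unfolding stage_def by blast
    ultimately show ?thesis by blast
  qed
  define pc where "pc n x = (THE p. p \<in> Sq n \<and> x \<in> fst p)" for n x
  have pc: "pc n x \<in> Sq n \<and> x \<in> fst (pc n x)" if "x \<in> X" for x n
    using theI'[OF ex1[OF that, of n]] by (simp add: pc_def)
  have pcu: "p = pc n x" if "x \<in> X" "p \<in> Sq n" "x \<in> fst p" for x n p
    using ex1[OF that(1), of n] pc[OF that(1), of n] that by blast
  have nest: "snd (pc (Suc n) x) \<subseteq> snd (pc n x)" if x: "x \<in> X" for x n
  proof -
    obtain p where p: "p \<in> Sq n" "fst (pc (Suc n) x) \<subseteq> fst p" "snd (pc (Suc n) x) \<subseteq> snd p"
      using H2[of n] pc[OF x, of "Suc n"] by blast
    have "p = pc n x" using pcu[OF x p(1)] p(2) pc[OF x, of "Suc n"] by blast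
    then show ?thesis using p(3) by simp
  qed
  have dec: "snd (pc m x) \<subseteq> snd (pc n x)" if x: "x \<in> X" and "n \<le> m" for x n m
    using lift_Suc_antimono_le[of "\<lambda>n. snd (pc n x)", OF nest[OF x] \<open>n \<le> m\<close>] .
  have cpt: "compact (snd (pc n x))" if "x \<in> X" for x n
    using pc[OF that, of n] H1[of n] by (auto simp: stage_def clopen_in_def)
  have nem: "snd (pc n x) \<noteq> {}" if "x \<in> X" for x n
    using pc[OF that, of n] H1[of n] by (auto simp: stage_def)
  have inter: "\<exists>y. \<forall>n. y \<in> snd (pc n x)" if x: "x \<in> X" for x
  proof -
    have "snd (pc 0 x) \<inter> (\<Inter>n\<in>UNIV. snd (pc n x)) \<noteq> {}"
    proof (rule compact_imp_fip_image[OF cpt[OF x]])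
      show "\<And>i. i \<in> UNIV \<Longrightarrow> closed (snd (pc i x))" using cpt[OF x] compact_imp_closed by blast
      fix I :: "nat set" assume I: "finite I" "I \<subseteq> UNIV"
      define m where "m = Max (insert 0 I)"
      have "\<forall>i\<in>I. i \<le> m" using I by (auto simp: m_def)
      then have "snd (pc m x) \<subseteq> snd (pc 0 x) \<inter> (\<Inter>i\<in>I. snd (pc i x))"
        using dec[OF x] by blast
      then show "snd (pc 0 x) \<inter> (\<Inter>i\<in>I. snd (pc i x)) \<noteq> {}" using nem[OF x, of m] by blast
    qed
    then show ?thesis by blast
  qed
  define h where "h x = (SOME y. \<forall>n. y \<in> snd (pc n x))" for x
  have hin: "h x \<in> snd (pc n x)" if "x \<in> X" for x n
    using someI_ex[OF inter[OF that]] by (simp add: h_def)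
  have P1: "\<forall>n. \<forall>p\<in>Sq n. \<forall>x\<in>fst p. h x \<in> snd p"
  proof (intro allI ballI)
    fix n p x assume "p \<in> Sq n" "x \<in> fst p"
    moreover then have "x \<in> X" using H1[of n] by (auto simp: stage_def)
    ultimately show "h x \<in> snd p" using pcu hin by metis
  qed
  have P3: "h ` X \<subseteq> Y"
  proof
    fix y assume "y \<in> h ` X"
    then obtain x where x: "x \<in> X" "y = h x" by auto
    then show "y \<in> Y" using hin[OF x(1), of 0] pc[OF x(1), of 0] H1[of 0]
      by (auto simp: stage_def clopen_in_def)
  qed
  have P2: "continuous_on X h"
    unfolding continuous_on_iff
  proof (intro ballI allI impI)
    fix x e assume x: "x \<in> X" and e: "(0::real) < e"
    obtain n where n: "inverse (real (Suc n)) < e" using reals_Archimedean[OF e] by blast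
    let ?p = "pc (Suc n) x"
    have pS: "?p \<in> Sq (Suc n)" "x \<in> fst ?p" using pc[OF x] by auto
    then have "clopen_in X (fst ?p)" using H1[of "Suc n"] by (auto simp: stage_def)
    then obtain Ob where Ob: "open Ob" "fst ?p = X \<inter> Ob" using clopen_in_open by blast
    then obtain d where d: "d > 0" "ball x d \<subseteq> Ob" using pS(2) open_contains_ball by blast
    show "\<exists>d>0. \<forall>x'\<in>X. dist x' x < d \<longrightarrow> dist (h x') (h x) < e"
    proof (intro exI conjI ballI impI)
      show "d > 0" by fact
      fix x' assume x': "x' \<in> X" "dist x' x < d"
      then have "x' \<in> fst ?p" using Ob d by (auto simp: dist_commute)
      then have "h x' \<in> snd ?p" using P1 pS by blast
      moreover have "h x \<in> snd ?p" using P1 pS by blast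
      ultimately have "dist (h x') (h x) < inverse (real (Suc n))" using H3[of n] pS(1)
        by (auto simp: small_def)
      then show "dist (h x') (h x) < e" using n by simp
    qed
  qed
  show ?thesis using P1 P2 P3 by blast
qed

lemma stage_swap:
  assumes "stage X Y S" shows "stage Y X (prod.swap ` S)"
proof -
  have e1: "fst ` prod.swap ` S = snd ` S" "snd ` prod.swap ` S = fst ` S" by (auto simp: image_image)
  have d: "\<forall>p\<in>prod.swap ` S. \<forall>q\<in>prod.swap ` S. p \<noteq> q \<longrightarrow> fst p \<inter> fst q = {} \<and> snd p \<inter> snd q = {}"
  proof (intro ballI impI)
    fix p q assume "p \<in> prod.swap ` S" "q \<in> prod.swap ` S" "p \<noteq> q"
    then obtain a b where ab: "a \<in> S" "b \<in> S" "p = prod.swap a" "q = prod.swap b" "a \<noteq> b" by auto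
    then show "fst p \<inter> fst q = {} \<and> snd p \<inter> snd q = {}" using assms unfolding stage_def by auto
  qed
  show ?thesis using assms d unfolding stage_def e1 by auto
qed

lemma cantor_homeo_rel:
  fixes X :: "'a::metric_space set" and Y :: "'b::metric_space set"
  assumes X: "cset X" and Y: "cset Y" and S0: "stage X Y S0"
  shows "\<exists>h g. homeomorphism X Y h g \<and> (\<forall>p\<in>S0. h ` fst p = snd p)"
proof -
  define Sq where "Sq = rec_nat S0 (\<lambda>n S. SOME S'. refines X Y (inverse (real (Suc n))) S S')"
  have Sq0: "Sq 0 = S0" by (simp add: Sq_def)
  have SqS: "Sq (Suc n) = (SOME S'. refines X Y (inverse (real (Suc n))) (Sq n) S')" for n
    by (simp add: Sq_def)
  have both: "stage X Y (Sq n) \<and> refines X Y (inverse (real (Suc n))) (Sq n) (Sq (Suc n))" for n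
  proof (induction n)
    case 0
    have "\<exists>S'. refines X Y (inverse (real (Suc 0))) (Sq 0) S'"
      using refine_step[OF X Y] S0 Sq0 by simp
    then show ?case using S0 Sq0 SqS[of 0] by (metis someI_ex)
  next
    case (Suc n)
    then have st: "stage X Y (Sq (Suc n))" by (simp add: refines_def)
    have "\<exists>S'. refines X Y (inverse (real (Suc (Suc n)))) (Sq (Suc n)) S'"
      using refine_step[OF X Y st] by simp
    then show ?case using st SqS[of "Suc n"] by (metis someI_ex)
  qed
  have H1: "\<And>n. stage X Y (Sq n)" using both by blast
  have H2: "\<And>n. \<forall>p'\<in>Sq (Suc n). \<exists>p\<in>Sq n. fst p' \<subseteq> fst p \<and> snd p' \<subseteq> snd p"
    using both by (simp add: refines_def)
  have H3: "\<And>n. \<forall>p\<in>Sq (Suc n). small (inverse (real (Suc n))) (fst p) \<and> small (inverse (real (Suc n))) (snd p)"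
    using both by (simp add: refines_def)
  obtain h where h: "\<forall>n. \<forall>p\<in>Sq n. \<forall>x\<in>fst p. h x \<in> snd p" "continuous_on X h" "h ` X \<subseteq> Y"
    using limit_map[OF H1 H2 H3] by blast
  define Tq where "Tq n = prod.swap ` Sq n" for n
  have G1: "\<And>n. stage Y X (Tq n)" unfolding Tq_def using stage_swap[OF H1] by blast
  have G2: "\<forall>p'\<in>Tq (Suc n). \<exists>p\<in>Tq n. fst p' \<subseteq> fst p \<and> snd p' \<subseteq> snd p" for n
  proof
    fix p' assume "p' \<in> Tq (Suc n)"
    then obtain a where a: "a \<in> Sq (Suc n)" "p' = prod.swap a" by (auto simp: Tq_def)
    then obtain b where b: "b \<in> Sq n" "fst a \<subseteq> fst b" "snd a \<subseteq> snd b" using H2[of n] by blast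
    show "\<exists>p\<in>Tq n. fst p' \<subseteq> fst p \<and> snd p' \<subseteq> snd p"
      using a b by (intro bexI[of _ "prod.swap b"]) (auto simp: Tq_def)
  qed
  have G3: "\<And>n. \<forall>p\<in>Tq (Suc n). small (inverse (real (Suc n))) (fst p) \<and> small (inverse (real (Suc n))) (snd p)"
    using H3 unfolding Tq_def by fastforce
  obtain g where g: "\<forall>n. \<forall>p\<in>Tq n. \<forall>x\<in>fst p. g x \<in> snd p" "continuous_on Y g" "g ` Y \<subseteq> X"
    using limit_map[OF G1 G2 G3] by blast
  have g': "g y \<in> fst p" if "p \<in> Sq n" "y \<in> snd p" for p n y
    using g(1) that unfolding Tq_def by fastforce
  have hg: "h (g y) = y" if y: "y \<in> Y" for y
  proof (rule small_dist_zero)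
    fix n
    obtain p where p: "p \<in> Sq (Suc n)" "y \<in> snd p" using H1[of "Suc n"] y by (auto simp: stage_def)
    have "h (g y) \<in> snd p" using h(1) g'[OF p] p by blast
    then show "dist (h (g y)) y < inverse (real (Suc n))" using H3[of n] p by (auto simp: small_def)
  qed
  have gh: "g (h x) = x" if x: "x \<in> X" for x
  proof (rule small_dist_zero)
    fix n
    obtain p where p: "p \<in> Sq (Suc n)" "x \<in> fst p" using H1[of "Suc n"] x by (auto simp: stage_def)
    have "h x \<in> snd p" using h(1) p by blast
    then have "g (h x) \<in> fst p" using g'[OF p(1)] by blast
    then show "dist (g (h x)) x < inverse (real (Suc n))" using H3[of n] p by (auto simp: small_def)
  qed
  have "homeomorphism X Y h g" unfolding homeomorphism_def
  proof (intro conjI ballI)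
    show "h ` X = Y" using h(3) g(3) hg by (metis image_eqI subsetI subset_antisym image_subset_iff)
    show "g ` Y = X" using h(3) g(3) gh by (metis image_eqI subsetI subset_antisym image_subset_iff)
  qed (use h g hg gh in auto)
  moreover have "\<forall>p\<in>S0. h ` fst p = snd p"
  proof
    fix p assume p: "p \<in> S0"
    then have p0: "p \<in> Sq 0" by (simp add: Sq0)
    show "h ` fst p = snd p"
    proof
      show "h ` fst p \<subseteq> snd p" using h(1) p0 by blast
      show "snd p \<subseteq> h ` fst p"
      proof
        fix y assume y: "y \<in> snd p"
        then have "y \<in> Y" using H1[of 0] p0 by (auto simp: stage_def clopen_in_def)
        then show "y \<in> h ` fst p" using g'[OF p0 y] hg by (metis image_eqI)
      qed
    qed
  qed
  ultimately show ?thesis by blast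
qed

datatype pos = Fin int | Top nat | Bot nat

instance pos :: countable by countable_datatype

definition tt :: "int \<Rightarrow> real" where
  "tt n = (if n \<ge> 0 then 1 - inverse (2 ^ (nat n + 1)) else inverse (2 ^ (nat (-n) + 1)))"

definition fmap :: "real \<Rightarrow> real" where "fmap t = min (2*t) ((1+t)/2)"

definition rot :: "nat \<Rightarrow> real \<Rightarrow> real" where
  "rot P x = min (x+1) ((real P - 1) * (real P - 1 - x))"

lemma tt_step: "fmap (tt n) = tt (n+1)"
proof (cases "n \<ge> 0")
  case True
  define a :: real where "a = inverse (2 ^ (nat n + 1))"
  have a: "0 < a" "a \<le> 1/2" unfolding a_def by (auto simp: field_simps)
  have "tt n = 1 - a" using True by (simp add: tt_def a_def)
  moreover have "tt (n+1) = 1 - a/2" using True by (simp add: tt_def a_def nat_add_distrib field_simps)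
  moreover have "fmap (1 - a) = 1 - a/2" using a by (simp add: fmap_def min_def)
  ultimately show ?thesis by simp
next
  case False
  define a :: real where "a = inverse (2 ^ (nat (-n) + 1))"
  have "(2::real)^2 \<le> 2 ^ (nat (-n) + 1)" using False by (intro power_increasing) auto
  then have a: "0 < a" "a \<le> 1/4" unfolding a_def
    by (auto simp: field_simps)
  have "tt n = a" using False by (simp add: tt_def a_def)
  moreover have "tt (n+1) = 2 * a"
  proof (cases "n = -1")
    case True then show ?thesis by (simp add: tt_def a_def)
  next
    case F2: False
    then have "nat (-n) = nat (- (n+1)) + 1" using False by simp
    then show ?thesis using False F2 by (simp add: tt_def a_def)
  qed
  moreover have "fmap a = 2 * a" using a by (simp add: fmap_def min_def)
  ultimately show ?thesis by simp
qed

lemma tt_range: "0 < tt n \<and> tt n < 1"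
proof -
  have "(1::real) \<le> 2 ^ k" for k :: nat by simp
  then have "(1::real) < 2 * 2 ^ k" for k :: nat
  proof -
    have "(1::real) \<le> 2 ^ k" by simp
    then show ?thesis by linarith
  qed
  then show ?thesis by (auto simp: tt_def field_simps)
qed

lemma tt_ge: "n \<ge> 0 \<Longrightarrow> tt n \<ge> 1/2"
  by (simp add: tt_def field_simps)

lemma tt_le: "n < 0 \<Longrightarrow> tt n \<le> 1/4"
proof -
  assume n: "n < 0"
  have "(2::real)^2 \<le> 2 ^ (nat (-n) + 1)" using n by (intro power_increasing) auto
  then show ?thesis using n by (simp add: tt_def field_simps)
qed

lemma tt_inj: "tt n = tt n' \<Longrightarrow> n = n'"
proof -
  assume eq: "tt n = tt n'"
  consider "n \<ge> 0" "n' \<ge> 0" | "n < 0" "n' < 0" | "n \<ge> 0" "n' < 0" | "n < 0" "n' \<ge> 0" by linarith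
  then show "n = n'"
  proof cases
    case 1
    then have "(2::real) ^ (nat n + 1) = 2 ^ (nat n' + 1)" using eq by (simp add: tt_def)
    then have "nat n + 1 = nat n' + 1" using power_inject_exp[of "2::real"] by simp
    then show ?thesis using 1 by simp
  next
    case 2
    then have "(2::real) ^ (nat (-n) + 1) = 2 ^ (nat (-n') + 1)" using eq by (simp add: tt_def)
    then have "nat (-n) + 1 = nat (-n') + 1" using power_inject_exp[of "2::real"] by simp
    then show ?thesis using 2 by simp
  next
    case 3 then show ?thesis using eq tt_ge[of n] tt_le[of n'] by simp
  next
    case 4 then show ?thesis using eq tt_ge[of n'] tt_le[of n] by simp
  qed
qed

lemma rot_int:
  assumes "0 \<le> r" "r < int P"
  shows "rot P (real_of_int r) = real_of_int ((r + 1) mod int P)"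
proof (cases "r + 1 < int P")
  case True
  then have "(r + 1) mod int P = r + 1" using assms by simp
  moreover have "real_of_int r + 1 \<le> (real P - 1) * (real P - 1 - real_of_int r)"
  proof -
    have "real P - 1 - real_of_int r \<ge> 1" using True by linarith
    moreover have "real P - 1 \<ge> real_of_int r + 1" using True by linarith
    moreover have "real_of_int r + 1 \<ge> 0" using assms by linarith
    ultimately have "(real P - 1) * 1 \<le> (real P - 1) * (real P - 1 - real_of_int r)"
      by (intro mult_left_mono) auto
    then show ?thesis using \<open>real P - 1 \<ge> real_of_int r + 1\<close> by (metis mult_1_right order_trans)
  qed
  ultimately show ?thesis by (simp add: rot_def min_def)
next
  case False
  then have r: "r + 1 = int P" using assms by simp
  then have "real_of_int r = real P - 1" by linarith
  moreover have "(r + 1) mod int P = 0" using r by simp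
  ultimately show ?thesis by (simp add: rot_def min_def)
qed

lemma rot_nat: "r < P \<Longrightarrow> rot P (real r) = real ((r + 1) mod P)"
proof -
  assume r: "r < P"
  have "(int r + 1) mod int P = int ((r + 1) mod P)" by (simp add: zmod_int add.commute)
  then have "real_of_int ((int r + 1) mod int P) = real ((r + 1) mod P)"
    by (metis of_int_of_nat_eq)
  moreover have "rot P (real_of_int (int r)) = real_of_int ((int r + 1) mod int P)"
    using r by (intro rot_int) auto
  ultimately show ?thesis by simp
qed

type_synonym pt = "(real \<times> real) \<times> (real \<times> real)"
type_synonym idx = "(nat \<times> nat) \<times> pos"

fun emb :: "nat \<Rightarrow> idx \<Rightarrow> pt" where
  "emb P (e, Fin n) = ((real (fst e), real (snd e)), (real_of_int (n mod int P), tt n))"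
| "emb P (e, Top r) = ((real (fst e), real (snd e)), (real r, 1))"
| "emb P (e, Bot r) = ((real (fst e), real (snd e)), (real r, 0))"

fun shi :: "nat \<Rightarrow> idx \<Rightarrow> idx" where
  "shi P (e, Fin n) = (e, Fin (n + 1))"
| "shi P (e, Top r) = (e, Top ((r + 1) mod P))"
| "shi P (e, Bot r) = (e, Bot ((r + 1) mod P))"

definition smap :: "nat \<Rightarrow> pt \<Rightarrow> pt" where
  "smap P y = (fst y, (rot P (fst (snd y)), fmap (snd (snd y))))"

definition Jset :: "(nat \<times> nat) set \<Rightarrow> nat \<Rightarrow> idx set" where
  "Jset E P = {(e, Fin n) | e n. e \<in> E} \<union> {(e, Top r) | e r. e \<in> E \<and> r < P} \<union> {(e, Bot r) | e r. e \<in> E \<and> r < P}"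

lemma smap_cont: "continuous_on S (smap P)"
  unfolding smap_def rot_def fmap_def by (intro continuous_intros) auto

lemma emb_shi:
  assumes "\<iota> \<in> Jset E P" "P > 0"
  shows "smap P (emb P \<iota>) = emb P (shi P \<iota>)"
proof -
  consider (F) e n where "\<iota> = (e, Fin n)" | (T) e r where "\<iota> = (e, Top r)" "r < P"
    | (B) e r where "\<iota> = (e, Bot r)" "r < P"
    using assms by (auto simp: Jset_def)
  then show ?thesis
  proof cases
    case F
    have "rot P (real_of_int (n mod int P)) = real_of_int ((n mod int P + 1) mod int P)"
      using assms by (intro rot_int) auto
    also have "\<dots> = real_of_int ((n + 1) mod int P)" by (simp add: mod_add_left_eq)
    finally show ?thesis using F by (simp add: smap_def tt_step)
  next
    case T
    have "rot P (real r) = real ((r + 1) mod P)" using T(2) by (rule rot_nat)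
    moreover have "fmap 1 = 1" by (simp add: fmap_def)
    ultimately show ?thesis using T(1) by (simp add: smap_def)
  next
    case B
    have "rot P (real r) = real ((r + 1) mod P)" using B(2) by (rule rot_nat)
    moreover have "fmap 0 = 0" by (simp add: fmap_def)
    ultimately show ?thesis using B(1) by (simp add: smap_def)
  qed
qed

lemma emb_inj: "inj_on (emb P) (Jset E P)"
proof (rule inj_onI)
  fix a b assume a: "a \<in> Jset E P" and b: "b \<in> Jset E P" and eq: "emb P a = emb P b"
  obtain ea pa where ap: "a = (ea, pa)" by (cases a)
  obtain eb pb where bp: "b = (eb, pb)" by (cases b)
  have fe: "fst (emb P (e, p)) = (real (fst e), real (snd e))" for e p by (cases p) auto
  have "(real (fst ea), real (snd ea)) = (real (fst eb), real (snd eb))"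
    using fe[of ea pa] fe[of eb pb] eq ap bp by simp
  then have "ea = eb" by (simp add: prod_eq_iff)
  moreover have "pa = pb"
  proof (cases pa)
    case (Fin n)
    show ?thesis
    proof (cases pb)
      case (Fin n')
      then show ?thesis using \<open>pa = Fin n\<close> eq ap bp tt_inj by auto
    next
      case (Top r) then show ?thesis using \<open>pa = Fin n\<close> eq ap bp tt_range[of n] by auto
    next
      case (Bot r) then show ?thesis using \<open>pa = Fin n\<close> eq ap bp tt_range[of n] by auto
    qed
  next
    case (Top r)
    show ?thesis
    proof (cases pb)
      case (Fin n') then show ?thesis using \<open>pa = Top r\<close> eq ap bp tt_range[of n'] by auto
    qed (use \<open>pa = Top r\<close> eq ap bp in auto)
  next
    case (Bot r)
    show ?thesis
    proof (cases pb)
      case (Fin n') then show ?thesis using \<open>pa = Bot r\<close> eq ap bp tt_range[of n'] by auto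
    qed (use \<open>pa = Bot r\<close> eq ap bp in auto)
  qed
  ultimately show "a = b" using ap bp by simp
qed


lemma shi_J: "P > 0 \<Longrightarrow> \<iota> \<in> Jset E P \<Longrightarrow> shi P \<iota> \<in> Jset E P"
  by (auto simp: Jset_def)

lemma shi_funpow_Fin: "(shi P ^^ k) (e, Fin n) = (e, Fin (n + int k))"
  by (induction k) (auto simp: add.assoc)

lemma shi_funpow_Top: "r < P \<Longrightarrow> (shi P ^^ k) (e, Top r) = (e, Top ((r + k) mod P))"
  by (induction k) (auto simp: mod_Suc_eq)

lemma shi_funpow_Bot: "r < P \<Longrightarrow> (shi P ^^ k) (e, Bot r) = (e, Bot ((r + k) mod P))"
  by (induction k) (auto simp: mod_Suc_eq)

lemma suc_mod: "(r::nat) < P \<Longrightarrow> (r + 1) mod P = (if r + 1 = P then 0 else r + 1)"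
proof (cases "r + 1 = P")
  case False
  assume "r < P"
  then have "r + 1 < P" using False by linarith
  then show ?thesis using False by simp
qed simp

lemma modinj: "(r::nat) < P \<Longrightarrow> r' < P \<Longrightarrow> (r + 1) mod P = (r' + 1) mod P \<Longrightarrow> r = r'"
  using suc_mod[of r P] suc_mod[of r' P] by (auto split: if_splits)

lemma shi_inj: "P > 0 \<Longrightarrow> inj_on (shi P) (Jset E P)"
proof (rule inj_onI)
  fix a b assume P: "P > 0" and a: "a \<in> Jset E P" and b: "b \<in> Jset E P" and eq: "shi P a = shi P b"
  obtain ea pa where ap: "a = (ea, pa)" by (cases a)
  obtain eb pb where bp: "b = (eb, pb)" by (cases b)
  show "a = b"
  proof (cases pa)
    case (Fin n)
    then show ?thesis using eq ap bp by (cases pb) auto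
  next
    case (Top r)
    then have r: "r < P" using a ap by (auto simp: Jset_def)
    show ?thesis
    proof (cases pb)
      case (Top r')
      then have "r' < P" using b bp by (auto simp: Jset_def)
      then show ?thesis using modinj[OF r] eq ap bp \<open>pa = Top r\<close> Top by auto
    qed (use eq ap bp \<open>pa = Top r\<close> in auto)
  next
    case (Bot r)
    then have r: "r < P" using a ap by (auto simp: Jset_def)
    show ?thesis
    proof (cases pb)
      case (Bot r')
      then have "r' < P" using b bp by (auto simp: Jset_def)
      then show ?thesis using modinj[OF r] eq ap bp \<open>pa = Bot r\<close> Bot by auto
    qed (use eq ap bp \<open>pa = Bot r\<close> in auto)
  qed
qed

lemma shi_surj: "P > 0 \<Longrightarrow> shi P ` Jset E P = Jset E P"
proof
  assume P: "P > 0"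
  show "shi P ` Jset E P \<subseteq> Jset E P" using shi_J[OF P] by blast
  show "Jset E P \<subseteq> shi P ` Jset E P"
  proof
    fix \<iota> assume i: "\<iota> \<in> Jset E P"
    have pr: "r < P \<Longrightarrow> \<exists>r'<P. (r' + 1) mod P = r" for r
    proof (cases "r = 0")
      case True
      then show ?thesis using P by (intro exI[of _ "P - 1"]) auto
    next
      case False
      assume "r < P"
      then show ?thesis using False by (intro exI[of _ "r - 1"]) auto
    qed
    show "\<iota> \<in> shi P ` Jset E P"
    proof -
      consider (F) e n where "\<iota> = (e, Fin n)" "e \<in> E" | (T) e r where "\<iota> = (e, Top r)" "r < P" "e \<in> E"
        | (B) e r where "\<iota> = (e, Bot r)" "r < P" "e \<in> E"
        using i by (auto simp: Jset_def)
      then show ?thesis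
      proof cases
        case F
        moreover have "(e, Fin (n - 1)) \<in> Jset E P" using F unfolding Jset_def by blast
        ultimately show ?thesis by (intro image_eqI[of _ _ "(e, Fin (n - 1))"]) auto
      next
        case T
        then obtain r' where "r' < P" "(r' + 1) mod P = r" using pr by blast
        moreover have "(e, Top r') \<in> Jset E P" using T \<open>r' < P\<close> unfolding Jset_def by blast
        ultimately show ?thesis using T by (intro image_eqI[of _ _ "(e, Top r')"]) auto
      next
        case B
        then obtain r' where "r' < P" "(r' + 1) mod P = r" using pr by blast
        moreover have "(e, Bot r') \<in> Jset E P" using B \<open>r' < P\<close> unfolding Jset_def by blast
        ultimately show ?thesis using B by (intro image_eqI[of _ _ "(e, Bot r')"]) auto
      qed
    qed
  qed
qed

lemma tt_top: "e > 0 \<Longrightarrow> \<exists>N0::int. \<forall>n\<ge>N0. \<bar>tt n - 1\<bar> < e"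
proof -
  assume e: "e > 0"
  obtain k where k: "inverse ((2::real) ^ k) < e"
    using LIMSEQ_inverse_realpow_zero[of "2::real"] e
  proof -
    obtain no where "\<forall>n\<ge>no. norm (inverse ((2::real) ^ n) - 0) < e"
      using LIMSEQ_D[OF LIMSEQ_inverse_realpow_zero[of "2::real"] e] by auto
    then have "norm (inverse ((2::real) ^ no) - 0) < e" by blast
    then have "inverse ((2::real) ^ no) < e" by simp
    then show ?thesis using that by blast
  qed
  show ?thesis
  proof (intro exI allI impI)
    fix n :: int assume n: "n \<ge> int k"
    then have "k \<le> nat n + 1" by linarith
    then have "(2::real) ^ k \<le> 2 ^ (nat n + 1)" by (intro power_increasing) auto
    then have "inverse ((2::real) ^ (nat n + 1)) \<le> inverse (2 ^ k)" by (intro le_imp_inverse_le) auto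
    moreover have "\<bar>tt n - 1\<bar> = inverse (2 ^ (nat n + 1))" using n by (simp add: tt_def)
    ultimately show "\<bar>tt n - 1\<bar> < e" using k by linarith
  qed
qed

lemma tt_bot: "e > 0 \<Longrightarrow> \<exists>N0::int. \<forall>n\<le>N0. \<bar>tt n\<bar> < e"
proof -
  assume e: "e > 0"
  obtain k where k: "inverse ((2::real) ^ k) < e"
    using LIMSEQ_inverse_realpow_zero[of "2::real"] e
  proof -
    obtain no where "\<forall>n\<ge>no. norm (inverse ((2::real) ^ n) - 0) < e"
      using LIMSEQ_D[OF LIMSEQ_inverse_realpow_zero[of "2::real"] e] by auto
    then have "norm (inverse ((2::real) ^ no) - 0) < e" by blast
    then have "inverse ((2::real) ^ no) < e" by simp
    then show ?thesis using that by blast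
  qed
  show ?thesis
  proof (intro exI allI impI)
    fix n :: int assume n: "n \<le> - int k - 1"
    then have "k \<le> nat (-n) + 1" by linarith
    then have "(2::real) ^ k \<le> 2 ^ (nat (-n) + 1)" by (intro power_increasing) auto
    then have "inverse ((2::real) ^ (nat (-n) + 1)) \<le> inverse (2 ^ k)" by (intro le_imp_inverse_le) auto
    moreover have "\<bar>tt n\<bar> = inverse (2 ^ (nat (-n) + 1))" using n by (simp add: tt_def)
    ultimately show "\<bar>tt n\<bar> < e" using k by linarith
  qed
qed


lemma dist_emb_same: "dist ((u, (x, t)) :: pt) (u, (x, t')) = \<bar>t - t'\<bar>"
  by (simp add: dist_Pair_Pair dist_real_def)

lemma emb_Fin_shift: "P > 0 \<Longrightarrow> emb P (e, Fin (a + int (k * P))) = ((real (fst e), real (snd e)), (real_of_int (a mod int P), tt (a + int (k * P))))"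
  by (simp add: of_nat_mult)

lemma seq_top:
  assumes P: "P > 0"
  shows "(\<lambda>k. emb P (e, Fin (a + int (k * P)))) \<longlonglongrightarrow> emb P (e, Top (nat (a mod int P)))"
proof (rule LIMSEQ_I)
  fix r :: real assume r: "r > 0"
  obtain N0 where N0: "\<And>n. n \<ge> N0 \<Longrightarrow> \<bar>tt n - 1\<bar> < r" using tt_top[OF r] by blast
  have lim: "emb P (e, Top (nat (a mod int P))) = ((real (fst e), real (snd e)), (real_of_int (a mod int P), 1))"
    using P by simp
  show "\<exists>no. \<forall>k\<ge>no. norm (emb P (e, Fin (a + int (k * P))) - emb P (e, Top (nat (a mod int P)))) < r"
  proof (intro exI allI impI)
    fix k assume k: "k \<ge> nat (N0 - a)"
    have "k \<le> k * P" using P by (metis Suc_leI mult_le_mono2 mult.commute mult_1 One_nat_def)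
    then have "int k \<le> int (k * P)" by linarith
    then have "a + int (k * P) \<ge> N0" using k by linarith
    then have "\<bar>tt (a + int (k * P)) - 1\<bar> < r" by (rule N0)
    then show "norm (emb P (e, Fin (a + int (k * P))) - emb P (e, Top (nat (a mod int P)))) < r"
      using emb_Fin_shift[OF P, of e a k] lim dist_emb_same by (simp add: dist_norm[symmetric])
  qed
qed

lemma seq_bot:
  assumes P: "P > 0"
  shows "(\<lambda>k. emb P (e, Fin (a - int (k * P)))) \<longlonglongrightarrow> emb P (e, Bot (nat (a mod int P)))"
proof (rule LIMSEQ_I)
  fix r :: real assume r: "r > 0"
  obtain N0 where N0: "\<And>n. n \<le> N0 \<Longrightarrow> \<bar>tt n\<bar> < r" using tt_bot[OF r] by blast
  have lim: "emb P (e, Bot (nat (a mod int P))) = ((real (fst e), real (snd e)), (real_of_int (a mod int P), 0))"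
    using P by simp
  have sh: "emb P (e, Fin (a - int (k * P))) = ((real (fst e), real (snd e)), (real_of_int (a mod int P), tt (a - int (k * P))))" for k
  proof -
    have "a - int (k * P) = a + (- int k) * int P" by simp
    then have "(a - int (k * P)) mod int P = (a + (- int k) * int P) mod int P" by (simp only:)
    also have "\<dots> = a mod int P" by (rule mod_mult_self1)
    finally have "(a - int (k * P)) mod int P = a mod int P" .
    then show ?thesis by simp
  qed
  show "\<exists>no. \<forall>k\<ge>no. norm (emb P (e, Fin (a - int (k * P))) - emb P (e, Bot (nat (a mod int P)))) < r"
  proof (intro exI allI impI)
    fix k assume k: "k \<ge> nat (a - N0)"
    have "k \<le> k * P" using P by (metis Suc_leI mult_le_mono2 mult.commute mult_1 One_nat_def)
    then have "int k \<le> int (k * P)" by linarith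
    then have "a - int (k * P) \<le> N0" using k by linarith
    then have "\<bar>tt (a - int (k * P))\<bar> < r" by (rule N0)
    then show "norm (emb P (e, Fin (a - int (k * P))) - emb P (e, Bot (nat (a mod int P)))) < r"
      using sh[of k] lim dist_emb_same by (simp add: dist_norm[symmetric])
  qed
qed


lemma int_decomp_top:
  assumes P: "P > 0" and n: "n \<ge> int (m * P)"
  shows "\<exists>k. n = int (nat (n mod int P)) + int ((k + m) * P)"
proof -
  have "int (m * P) div int P = int m" using P by (simp add: of_nat_mult)
  then have q: "n div int P \<ge> int m" using zdiv_mono1[OF n, of "int P"] P by simp
  define k where "k = nat (n div int P) - m"
  have "int ((k + m) * P) = (n div int P) * int P" using q by (simp add: k_def of_nat_mult)
  moreover have "n = n mod int P + (n div int P) * int P" by simp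
  moreover have "int (nat (n mod int P)) = n mod int P" using P by simp
  ultimately show ?thesis by metis
qed

lemma int_decomp_bot:
  assumes P: "P > 0" and n: "n \<le> - int (m * P)"
  shows "\<exists>k. n = int (nat (n mod int P)) - int ((k + m) * P)"
proof -
  have a: "- int (m * P) = (- int m) * int P" by (simp add: of_nat_mult)
  have "(- int m) * int P div int P = - int m" using P by (intro nonzero_mult_div_cancel_right) simp
  then have "(- int (m * P)) div int P = - int m" by (simp only: a)
  then have q: "n div int P \<le> - int m" using zdiv_mono1[OF n, of "int P"] P by simp
  define k where "k = nat (- (n div int P)) - m"
  have "int ((k + m) * P) = - (n div int P) * int P" using q by (simp add: k_def of_nat_mult)
  moreover have "n = n mod int P + (n div int P) * int P" by simp
  moreover have "int (nat (n mod int P)) = n mod int P" using P by simp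
  ultimately show ?thesis by (metis diff_minus_eq_add minus_mult_left)
qed

lemma compact_sat:
  assumes P: "P > 0" and finE: "finite E" and F: "F \<subseteq> Jset E P"
    and satT: "\<And>e r k. e \<in> E \<Longrightarrow> r < P \<Longrightarrow> k \<ge> m \<Longrightarrow> (e, Fin (int r + int (k * P))) \<in> F \<longleftrightarrow> (e, Top r) \<in> F"
    and satB: "\<And>e r k. e \<in> E \<Longrightarrow> r < P \<Longrightarrow> k \<ge> m \<Longrightarrow> (e, Fin (int r - int (k * P))) \<in> F \<longleftrightarrow> (e, Bot r) \<in> F"
  shows "compact (emb P ` F)"
proof -
  define TT where "TT e r = insert (emb P (e, Top r)) (range (\<lambda>k. emb P (e, Fin (int r + int ((k + m) * P)))))" for e r
  define BT where "BT e r = insert (emb P (e, Bot r)) (range (\<lambda>k. emb P (e, Fin (int r - int ((k + m) * P)))))" for e r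
  have cTT: "compact (TT e r)" if r: "r < P" for e r
  proof -
    have ar: "int r + int (m * P) + int (k * P) = int r + int ((k + m) * P)" for k by (simp add: algebra_simps)
    have nr: "nat ((int r + int (m * P)) mod int P) = r" using r
      by (metis mod_mult_self1 of_nat_mult mod_less nat_int zmod_int)
    have "(\<lambda>k. emb P (e, Fin (int r + int ((k + m) * P)))) \<longlonglongrightarrow> emb P (e, Top (nat ((int r + int (m * P)) mod int P)))"
      using seq_top[OF P, of e "int r + int (m * P)"] unfolding ar .
    then have "(\<lambda>k. emb P (e, Fin (int r + int ((k + m) * P)))) \<longlonglongrightarrow> emb P (e, Top r)" by (simp only: nr)
    then show ?thesis unfolding TT_def by (rule compact_sequence_with_limit)
  qed
  have cBT: "compact (BT e r)" if r: "r < P" for e r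
  proof -
    have ar: "int r - int (m * P) - int (k * P) = int r - int ((k + m) * P)" for k by (simp add: algebra_simps)
    have md: "(int r - int (m * P)) mod int P = int r"
    proof -
      have "int r - int (m * P) = int r + (- int m) * int P" by (simp add: of_nat_mult)
      then have "(int r - int (m * P)) mod int P = int r mod int P" by (metis mod_mult_self1)
      then show ?thesis using r by simp
    qed
    have nr: "nat ((int r - int (m * P)) mod int P) = r" unfolding md by simp
    have "(\<lambda>k. emb P (e, Fin (int r - int ((k + m) * P)))) \<longlonglongrightarrow> emb P (e, Bot (nat ((int r - int (m * P)) mod int P)))"
      using seq_bot[OF P, of e "int r - int (m * P)"] unfolding ar .
    then have "(\<lambda>k. emb P (e, Fin (int r - int ((k + m) * P)))) \<longlonglongrightarrow> emb P (e, Bot r)" by (simp only: nr)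
    then show ?thesis unfolding BT_def by (rule compact_sequence_with_limit)
  qed
  define Mid where "Mid = (\<lambda>(e, n). (e, Fin n)) ` (E \<times> {- int (m * P) <..< int (m * P)})"
  have finMid: "finite Mid" unfolding Mid_def using finE by simp
  define IT where "IT = {(e, r). e \<in> E \<and> r < P \<and> (e, Top r) \<in> F}"
  define IB where "IB = {(e, r). e \<in> E \<and> r < P \<and> (e, Bot r) \<in> F}"
  have finIT: "finite IT" unfolding IT_def by (rule finite_subset[of _ "E \<times> {..<P}"]) (use finE in auto)
  have finIB: "finite IB" unfolding IB_def by (rule finite_subset[of _ "E \<times> {..<P}"]) (use finE in auto)
  have eq: "emb P ` F = emb P ` (F \<inter> Mid) \<union> (\<Union>(e, r)\<in>IT. TT e r) \<union> (\<Union>(e, r)\<in>IB. BT e r)"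
  proof
    show "emb P ` F \<subseteq> emb P ` (F \<inter> Mid) \<union> (\<Union>(e, r)\<in>IT. TT e r) \<union> (\<Union>(e, r)\<in>IB. BT e r)"
    proof
      fix y assume "y \<in> emb P ` F"
      then obtain \<iota> where i: "\<iota> \<in> F" "y = emb P \<iota>" by auto
      then have iJ: "\<iota> \<in> Jset E P" using F by auto
      consider (Fi) e n where "\<iota> = (e, Fin n)" "e \<in> E" | (T) e r where "\<iota> = (e, Top r)" "r < P" "e \<in> E"
        | (B) e r where "\<iota> = (e, Bot r)" "r < P" "e \<in> E"
        using iJ by (auto simp: Jset_def)
      then show "y \<in> emb P ` (F \<inter> Mid) \<union> (\<Union>(e, r)\<in>IT. TT e r) \<union> (\<Union>(e, r)\<in>IB. BT e r)"
      proof cases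
        case T
        then have "(e, r) \<in> IT" using i by (auto simp: IT_def)
        moreover have "y \<in> TT e r" using T i by (simp add: TT_def)
        ultimately show ?thesis by blast
      next
        case B
        then have "(e, r) \<in> IB" using i by (auto simp: IB_def)
        moreover have "y \<in> BT e r" using B i by (simp add: BT_def)
        ultimately show ?thesis by blast
      next
        case Fi
        consider "n \<ge> int (m * P)" | "n \<le> - int (m * P)" | "- int (m * P) < n \<and> n < int (m * P)" by linarith
        then show ?thesis
        proof cases
          case 1
          define r where "r = nat (n mod int P)"
          have r: "r < P" using P by (simp add: r_def nat_less_iff)
          obtain k where k: "n = int r + int ((k + m) * P)" using int_decomp_top[OF P 1] r_def by blast
          have "(e, Top r) \<in> F" using satT[OF Fi(2) r, of "k + m"] i Fi k by simp
          then have "(e, r) \<in> IT" using Fi r by (simp add: IT_def)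
          moreover have "y \<in> TT e r" using i Fi k by (simp add: TT_def)
          ultimately show ?thesis by blast
        next
          case 2
          define r where "r = nat (n mod int P)"
          have r: "r < P" using P by (simp add: r_def nat_less_iff)
          obtain k where k: "n = int r - int ((k + m) * P)" using int_decomp_bot[OF P 2] r_def by blast
          have "(e, Bot r) \<in> F" using satB[OF Fi(2) r, of "k + m"] i Fi k by simp
          then have "(e, r) \<in> IB" using Fi r by (simp add: IB_def)
          moreover have "y \<in> BT e r" using i Fi k by (simp add: BT_def)
          ultimately show ?thesis by blast
        next
          case 3
          then have "\<iota> \<in> Mid" using Fi unfolding Mid_def by force
          then show ?thesis using i by blast
        qed
      qed
    qed
    show "emb P ` (F \<inter> Mid) \<union> (\<Union>(e, r)\<in>IT. TT e r) \<union> (\<Union>(e, r)\<in>IB. BT e r) \<subseteq> emb P ` F"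
    proof (intro Un_least)
      show "emb P ` (F \<inter> Mid) \<subseteq> emb P ` F" by blast
      show "(\<Union>(e, r)\<in>IT. TT e r) \<subseteq> emb P ` F"
      proof (clarsimp simp: IT_def)
        fix e r y assume e: "e \<in> E" "r < P" "(e, Top r) \<in> F" "y \<in> TT e r"
        from e(4) consider "y = emb P (e, Top r)" | k where "y = emb P (e, Fin (int r + int ((k + m) * P)))"
          unfolding TT_def by blast
        then show "y \<in> emb P ` F"
        proof cases
          case 1 then show ?thesis using e(3) by blast
        next
          case (2 k)
          have "(e, Fin (int r + int ((k + m) * P))) \<in> F" using satT[OF e(1,2), of "k + m"] e(3) by simp
          then show ?thesis using 2 by blast
        qed
      qed
      show "(\<Union>(e, r)\<in>IB. BT e r) \<subseteq> emb P ` F"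
      proof (clarsimp simp: IB_def)
        fix e r y assume e: "e \<in> E" "r < P" "(e, Bot r) \<in> F" "y \<in> BT e r"
        from e(4) consider "y = emb P (e, Bot r)" | k where "y = emb P (e, Fin (int r - int ((k + m) * P)))"
          unfolding BT_def by blast
        then show "y \<in> emb P ` F"
        proof cases
          case 1 then show ?thesis using e(3) by blast
        next
          case (2 k)
          have "(e, Fin (int r - int ((k + m) * P))) \<in> F" using satB[OF e(1,2), of "k + m"] e(3) by simp
          then show ?thesis using 2 by blast
        qed
      qed
    qed
  qed
  have "compact (emb P ` (F \<inter> Mid))" using finMid by (intro finite_imp_compact) auto
  moreover have "compact (\<Union>(e, r)\<in>IT. TT e r)" using finIT cTT by (intro compact_UN) (auto simp: IT_def)
  moreover have "compact (\<Union>(e, r)\<in>IB. BT e r)" using finIB cBT by (intro compact_UN) (auto simp: IB_def)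
  ultimately show ?thesis unfolding eq by (intro compact_Un)
qed

lemma funpow_cont:
  assumes "continuous_on K f" "f ` K \<subseteq> K"
  shows "continuous_on K (f ^^ n) \<and> (f ^^ n) ` K \<subseteq> K"
proof (induction n)
  case 0 then show ?case by (simp add: continuous_on_id)
next
  case (Suc n)
  then have "continuous_on K (f \<circ> (f ^^ n))" using assms
    by (intro continuous_on_compose) (auto elim: continuous_on_subset)
  then show ?case using Suc assms by auto
qed

lemma funpow_periodic:
  assumes "(f ^^ P) q = q"
  shows "(f ^^ (k * P + r)) q = (f ^^ r) q"
proof -
  have "((f ^^ P) ^^ k) q = q" using assms by (induction k) auto
  then have "(f ^^ (k * P)) q = q" by (simp add: funpow_mult mult.commute)
  then show ?thesis by (simp add: funpow_add mult.commute add.commute)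
qed

lemma omega_periodic:
  fixes f :: "'a::metric_space \<Rightarrow> 'a"
  assumes cont: "continuous_on K f" and fK: "f ` K \<subseteq> K" and x: "x \<in> K" and q: "q \<in> K"
    and P: "P > 0" and per: "(f ^^ P) q = q"
    and conv: "(\<lambda>k. (f ^^ (k * P)) x) \<longlonglongrightarrow> q"
  shows "periodic_orbit f (omega_limit_set f x)"
proof -
  define Orb where "Orb = {(f ^^ n) q | n. True}"
  have xK: "(f ^^ (k * P)) x \<in> K" for k using funpow_cont[OF cont fK] x by blast
  have lim: "(\<lambda>k. (f ^^ (k * P + r)) x) \<longlonglongrightarrow> (f ^^ r) q" for r
  proof -
    have "(\<lambda>k. (f ^^ r) ((f ^^ (k * P)) x)) \<longlonglongrightarrow> (f ^^ r) q"
      using continuous_on_tendsto_compose[OF conjunct1[OF funpow_cont[OF cont fK, of r]] conv q] xK by simp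
    then show ?thesis by (simp add: funpow_add add.commute)
  qed
  have Orb1: "Orb \<subseteq> omega_limit_set f x"
  proof
    fix y assume "y \<in> Orb"
    then obtain r where y: "y = (f ^^ r) q" by (auto simp: Orb_def)
    show "y \<in> omega_limit_set f x" unfolding omega_limit_set_def
    proof (intro CollectI allI impI)
      fix e :: real and M :: nat assume e: "e > 0"
      obtain N where N: "\<And>k. k \<ge> N \<Longrightarrow> dist ((f ^^ (k * P + r)) x) y < e"
        using lim[of r] e y unfolding LIMSEQ_def by blast
      let ?k = "max N M"
      have "?k \<le> ?k * P" using P by (metis Suc_leI mult_le_mono2 mult.commute mult_1 One_nat_def)
      then have "?k * P + r \<ge> M" by linarith
      then show "\<exists>n\<ge>M. dist ((f ^^ n) x) y < e" using N[of ?k] by auto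
    qed
  qed
  have Ofin: "Orb = (\<lambda>r. (f ^^ r) q) ` {..<P}"
  proof
    show "Orb \<subseteq> (\<lambda>r. (f ^^ r) q) ` {..<P}"
    proof
      fix y assume "y \<in> Orb"
      then obtain n where y: "y = (f ^^ n) q" by (auto simp: Orb_def)
      have "n = (n div P) * P + n mod P" by simp
      then have "y = (f ^^ (n mod P)) q" using funpow_periodic[OF per, of "n div P" "n mod P"] y by metis
      then show "y \<in> (\<lambda>r. (f ^^ r) q) ` {..<P}" using P by auto
    qed
  qed (auto simp: Orb_def)
  have Orb2: "omega_limit_set f x \<subseteq> Orb"
  proof
    fix y assume y: "y \<in> omega_limit_set f x"
    show "y \<in> Orb"
    proof (rule ccontr)
      assume yO: "y \<notin> Orb"
      have "finite Orb" using Ofin by simp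
      then obtain d where d: "d > 0" "\<And>z. z \<in> Orb \<Longrightarrow> z \<noteq> y \<Longrightarrow> d \<le> dist y z"
        using finite_set_avoid[of Orb y] by blast
      have "\<forall>r\<in>{..<P}. eventually (\<lambda>k. dist ((f ^^ (k * P + r)) x) ((f ^^ r) q) < d/2) sequentially"
      proof
        fix r assume "r \<in> {..<P}"
        show "eventually (\<lambda>k. dist ((f ^^ (k * P + r)) x) ((f ^^ r) q) < d/2) sequentially"
          using tendstoD[OF lim[of r], of "d/2"] d by simp
      qed
      then have "eventually (\<lambda>k. \<forall>r\<in>{..<P}. dist ((f ^^ (k * P + r)) x) ((f ^^ r) q) < d/2) sequentially"
        by (intro eventually_ball_finite) auto
      then obtain N where N: "\<And>k r. k \<ge> N \<Longrightarrow> r < P \<Longrightarrow> dist ((f ^^ (k * P + r)) x) ((f ^^ r) q) < d/2"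
        unfolding eventually_sequentially by blast
      obtain n where n: "n \<ge> N * P" "dist ((f ^^ n) x) y < d/2"
      proof -
        have "\<forall>e>0. \<forall>M. \<exists>n\<ge>M. dist ((f ^^ n) x) y < e" using y by (simp add: omega_limit_set_def)
        moreover have "d/2 > 0" using d by simp
        ultimately have "\<exists>n\<ge>N * P. dist ((f ^^ n) x) y < d/2" by blast
        then show ?thesis using that by blast
      qed
      have nd: "n = (n div P) * P + n mod P" by simp
      have "N * P div P \<le> n div P" using n(1) by (rule div_le_mono)
      then have "n div P \<ge> N" using P by simp
      then have a: "dist ((f ^^ n) x) ((f ^^ (n mod P)) q) < d/2" using N[of "n div P" "n mod P"] P nd by simp
      have "(f ^^ (n mod P)) q \<in> Orb" by (auto simp: Orb_def)
      then have b: "d \<le> dist y ((f ^^ (n mod P)) q)" using d yO by blast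
      have "dist y ((f ^^ (n mod P)) q) \<le> dist ((f ^^ n) x) y + dist ((f ^^ n) x) ((f ^^ (n mod P)) q)"
        by (metis dist_commute dist_triangle)
      then show False using a b n(2) by linarith
    qed
  qed
  have "omega_limit_set f x = Orb" using Orb1 Orb2 by blast
  then show ?thesis unfolding periodic_orbit_def Orb_def using P per by blast
qed

fun clr :: "(nat \<times> nat \<Rightarrow> int \<Rightarrow> nat) \<Rightarrow> nat \<Rightarrow> nat \<Rightarrow> idx \<Rightarrow> nat" where
  "clr col P m (e, Fin n) = col e n"
| "clr col P m (e, Top r) = col e (int r + int (m * P))"
| "clr col P m (e, Bot r) = col e (int r - int (m * P))"

lemma Jset_Fin [simp]: "(e, Fin n) \<in> Jset E P \<longleftrightarrow> e \<in> E"
  unfolding Jset_def by blast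
lemma Jset_Top [simp]: "(e, Top r) \<in> Jset E P \<longleftrightarrow> e \<in> E \<and> r < P"
  unfolding Jset_def by blast
lemma Jset_Bot [simp]: "(e, Bot r) \<in> Jset E P \<longleftrightarrow> e \<in> E \<and> r < P"
  unfolding Jset_def by blast

locale colmodel =
  fixes E :: "(nat \<times> nat) set" and col :: "nat \<times> nat \<Rightarrow> int \<Rightarrow> nat" and P m0 m :: nat
  assumes Ppos: "P > 0" and finE: "finite E" and mm: "m \<ge> 2 * m0 + 1"
    and fwd: "\<And>e n. e \<in> E \<Longrightarrow> n \<ge> int m0 \<Longrightarrow> col e (n + int P) = col e n"
    and bwd: "\<And>e n. e \<in> E \<Longrightarrow> n \<le> - int m0 \<Longrightarrow> col e (n - int P) = col e n"
    and edge: "\<And>e n. e \<in> E \<Longrightarrow> (col e n, col e (n + 1)) \<in> E"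
    and start: "\<And>e. e \<in> E \<Longrightarrow> col e 0 = fst e \<and> col e 1 = snd e"
begin

lemma fwd_iter: "e \<in> E \<Longrightarrow> a \<ge> int m0 \<Longrightarrow> col e (a + int j * int P) = col e a"
proof (induction j)
  case (Suc j)
  have "col e (a + int (Suc j) * int P) = col e ((a + int j * int P) + int P)" by (simp add: algebra_simps)
  also have "\<dots> = col e (a + int j * int P)"
    using Suc.prems Ppos by (intro fwd) (auto intro!: add_increasing2)
  finally show ?case using Suc by simp
qed simp

lemma bwd_iter: "e \<in> E \<Longrightarrow> a \<le> - int m0 \<Longrightarrow> col e (a - int j * int P) = col e a"
proof (induction j)
  case (Suc j)
  have "col e (a - int (Suc j) * int P) = col e ((a - int j * int P) - int P)" by (simp add: algebra_simps)
  also have "\<dots> = col e (a - int j * int P)"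
  proof (intro bwd Suc.prems(1))
    have "int j * int P \<ge> 0" by simp
    then show "a - int j * int P \<le> - int m0" using Suc.prems by linarith
  qed
  finally show ?case using Suc by simp
qed simp

lemma col_fwd_eq:
  assumes e: "e \<in> E" and a: "a \<ge> int m0" and b: "b \<ge> int m0" and ab: "a mod int P = b mod int P"
  shows "col e a = col e b"
proof -
  have gen: "col e x = col e y" if "x \<le> y" "x \<ge> int m0" "x mod int P = y mod int P" for x y
  proof -
    have "int P dvd (y - x)" using that(3)[symmetric] by (simp add: mod_eq_dvd_iff)
    then obtain j where j: "y - x = int P * j" by (auto elim: dvdE)
    have "j \<ge> 0" using j that(1) Ppos by (metis diff_ge_0_iff_ge of_nat_0_less_iff zero_le_mult_iff not_le)
    then have yq: "y = x + int (nat j) * int P" using j by (simp add: algebra_simps)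
    have "col e y = col e (x + int (nat j) * int P)" by (simp only: yq)
    also have "\<dots> = col e x" by (rule fwd_iter[OF e that(2)])
    finally show ?thesis by simp
  qed
  show ?thesis
  proof (cases "a \<le> b")
    case True then show ?thesis using gen a ab by blast
  next
    case False then show ?thesis using gen[of b a] b ab by simp
  qed
qed

lemma col_bwd_eq:
  assumes e: "e \<in> E" and a: "a \<le> - int m0" and b: "b \<le> - int m0" and ab: "a mod int P = b mod int P"
  shows "col e a = col e b"
proof -
  have gen: "col e x = col e y" if "y \<le> x" "x \<le> - int m0" "x mod int P = y mod int P" for x y
  proof -
    have "int P dvd (x - y)" using that(3) by (simp add: mod_eq_dvd_iff)
    then obtain j where j: "x - y = int P * j" by (auto elim: dvdE)
    have "j \<ge> 0" using j that(1) Ppos by (metis diff_ge_0_iff_ge of_nat_0_less_iff zero_le_mult_iff not_le)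
    then have yq: "y = x - int (nat j) * int P" using j by (simp add: algebra_simps)
    have "col e y = col e (x - int (nat j) * int P)" by (simp only: yq)
    also have "\<dots> = col e x" by (rule bwd_iter[OF e that(2)])
    finally show ?thesis by simp
  qed
  show ?thesis
  proof (cases "b \<le> a")
    case True then show ?thesis using gen a ab by blast
  next
    case False then show ?thesis using gen[of a b] b ab by simp
  qed
qed


lemma kP_ge: "k \<ge> 1 \<Longrightarrow> int (k * P) \<ge> int P + int (k - 1)"
proof -
  assume k: "k \<ge> 1"
  have "k * P = P + (k - 1) * P" using k by (metis Suc_diff_1 less_eq_Suc_le mult_Suc One_nat_def)
  moreover have "(k - 1) * P \<ge> k - 1" using Ppos by simp
  ultimately show ?thesis by linarith
qed

lemma modP1: "(a + int (k * P)) mod int P = a mod int P"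
  by (metis mod_mult_self1 of_nat_mult)

lemma modP2: "(a - int (k * P)) mod int P = a mod int P"
proof -
  have "a - int (k * P) = a + (- int k) * int P" by (simp add: of_nat_mult)
  then show ?thesis by (metis mod_mult_self1)
qed

lemma modsuc: "r < P \<Longrightarrow> int ((r + 1) mod P) = (int r + 1) mod int P"
  by (simp add: zmod_int add.commute)

lemma tail_top:
  assumes e: "e \<in> E" and r: "r < P" and k: "k \<ge> m"
  shows "clr col P m (e, Fin (int r + int (k * P))) = clr col P m (e, Top r)
    \<and> clr col P m (shi P (e, Fin (int r + int (k * P)))) = clr col P m (shi P (e, Top r))"
proof
  have k1: "int (k * P) \<ge> int m0" "int (m * P) \<ge> int m0" using kP_ge[of k] kP_ge[of m] k mm by auto
  show "clr col P m (e, Fin (int r + int (k * P))) = clr col P m (e, Top r)"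
    using col_fwd_eq[OF e, of "int r + int (k * P)" "int r + int (m * P)"] k1 by (simp add: modP1)
  have "col e (int r + int (k * P) + 1) = col e (int ((r + 1) mod P) + int (m * P))"
  proof (rule col_fwd_eq[OF e])
    show "int r + int (k * P) + 1 \<ge> int m0" "int ((r + 1) mod P) + int (m * P) \<ge> int m0" using k1 by auto
    have "(int r + int (k * P) + 1) mod int P = (int r + 1 + int (k * P)) mod int P" by (simp add: algebra_simps)
    also have "\<dots> = (int r + 1) mod int P" by (rule modP1)
    also have "\<dots> = (int ((r + 1) mod P) + int (m * P)) mod int P"
      using modP1[of "int ((r + 1) mod P)" m] modsuc[OF r] by simp
    finally show "(int r + int (k * P) + 1) mod int P = (int ((r + 1) mod P) + int (m * P)) mod int P" .
  qed
  then show "clr col P m (shi P (e, Fin (int r + int (k * P)))) = clr col P m (shi P (e, Top r))" by simp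
qed

lemma tail_bot:
  assumes e: "e \<in> E" and r: "r < P" and k: "k \<ge> m"
  shows "clr col P m (e, Fin (int r - int (k * P))) = clr col P m (e, Bot r)
    \<and> clr col P m (shi P (e, Fin (int r - int (k * P)))) = clr col P m (shi P (e, Bot r))"
proof
  have k1: "int (k * P) \<ge> int P + int (k - 1)" "int (m * P) \<ge> int P + int (m - 1)"
    using kP_ge[of k] kP_ge[of m] k mm by auto
  have k2: "int (k - 1) \<ge> 2 * int m0" "int (m - 1) \<ge> 2 * int m0" using k mm by auto
  have rP: "int r + 1 \<le> int P" using r by simp
  have md: "(int r - int (k * P)) mod int P = (int r - int (m * P)) mod int P"
    by (simp only: modP2)
  have "col e (int r - int (k * P)) = col e (int r - int (m * P))"
    by (rule col_bwd_eq[OF e _ _ md]) (use k1 k2 rP in linarith)+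
  then show "clr col P m (e, Fin (int r - int (k * P))) = clr col P m (e, Bot r)" by simp
  have "col e (int r - int (k * P) + 1) = col e (int ((r + 1) mod P) - int (m * P))"
  proof (rule col_bwd_eq[OF e])
    have "int ((r + 1) mod P) < int P" using Ppos by simp
    then show "int r - int (k * P) + 1 \<le> - int m0" "int ((r + 1) mod P) - int (m * P) \<le> - int m0"
      using k1 k2 rP by linarith+
    have "(int r - int (k * P) + 1) mod int P = (int r + 1 - int (k * P)) mod int P" by (simp add: algebra_simps)
    also have "\<dots> = (int r + 1) mod int P" by (rule modP2)
    also have "\<dots> = (int ((r + 1) mod P) - int (m * P)) mod int P"
      using modP2[of "int ((r + 1) mod P)" m] modsuc[OF r] by simp
    finally show "(int r - int (k * P) + 1) mod int P = (int ((r + 1) mod P) - int (m * P)) mod int P" .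
  qed
  then show "clr col P m (shi P (e, Fin (int r - int (k * P)))) = clr col P m (shi P (e, Bot r))" by simp
qed

lemma clr_edge:
  assumes i: "\<iota> \<in> Jset E P"
  shows "(clr col P m \<iota>, clr col P m (shi P \<iota>)) \<in> E"
proof -
  consider (F) e n where "\<iota> = (e, Fin n)" "e \<in> E" | (T) e r where "\<iota> = (e, Top r)" "r < P" "e \<in> E"
    | (B) e r where "\<iota> = (e, Bot r)" "r < P" "e \<in> E"
    using i by (auto simp: Jset_def)
  then show ?thesis
  proof cases
    case F then show ?thesis using edge by simp
  next
    case T
    have "clr col P m (e, Fin (int r + int (m * P))) = clr col P m (e, Top r)
      \<and> clr col P m (shi P (e, Fin (int r + int (m * P)))) = clr col P m (shi P (e, Top r))"
      by (rule tail_top[OF T(3,2)]) simp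
    then show ?thesis using edge[OF T(3), of "int r + int (m * P)"] T(1) by simp
  next
    case B
    have "clr col P m (e, Fin (int r - int (m * P))) = clr col P m (e, Bot r)
      \<and> clr col P m (shi P (e, Fin (int r - int (m * P)))) = clr col P m (shi P (e, Bot r))"
      by (rule tail_bot[OF B(3,2)]) simp
    then show ?thesis using edge[OF B(3), of "int r - int (m * P)"] B(1) by simp
  qed
qed

definition Jp :: "nat \<Rightarrow> nat \<Rightarrow> idx set" where
  "Jp c d = {\<iota> \<in> Jset E P. clr col P m \<iota> = c \<and> clr col P m (shi P \<iota>) = d}"

lemma compact_Jp: "compact (emb P ` Jp c d)"
proof (rule compact_sat[OF Ppos finE])
  show "Jp c d \<subseteq> Jset E P" by (auto simp: Jp_def)
  fix e r k assume e: "e \<in> E" and r: "r < P" and k: "m \<le> k"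
  have inJ: "(e, Fin n) \<in> Jset E P" "(e, Top r) \<in> Jset E P" "(e, Bot r) \<in> Jset E P" for n
    using e r by auto
  show "(e, Fin (int r + int (k * P))) \<in> Jp c d \<longleftrightarrow> (e, Top r) \<in> Jp c d"
    using tail_top[OF e r k] inJ unfolding Jp_def by (simp only: mem_Collect_eq)
  show "(e, Fin (int r - int (k * P))) \<in> Jp c d \<longleftrightarrow> (e, Bot r) \<in> Jp c d"
    using tail_bot[OF e r k] inJ unfolding Jp_def by (simp only: mem_Collect_eq)
qed

lemma compact_J: "compact (emb P ` Jset E P)"
  by (rule compact_sat[OF Ppos finE]) (auto simp: Jset_def)

lemma Jp_nonempty: "(c, d) \<in> E \<Longrightarrow> ((c, d), Fin 0) \<in> Jp c d"
  using start[of "(c, d)"] by (auto simp: Jp_def Jset_def)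

lemma countable_J: "countable (emb P ` Jset E P)"
  by (intro countable_image) simp

end

lemma funpow_ev_periodic:
  assumes V: "finite V" and f: "f ` V \<subseteq> V" and x: "x \<in> V" and k: "k \<ge> card V"
  shows "(f ^^ (k + fact (card V))) x = (f ^^ k) x"
proof -
  have inV: "(f ^^ i) x \<in> V" for i by (induction i) (use x f in auto)
  have "\<not> inj_on (\<lambda>i. (f ^^ i) x) {0..card V}"
  proof
    assume "inj_on (\<lambda>i. (f ^^ i) x) {0..card V}"
    moreover have "(\<lambda>i. (f ^^ i) x) ` {0..card V} \<subseteq> V" using inV by auto
    ultimately have "card {0..card V} \<le> card V" using V card_inj_on_le by blast
    then show False by simp
  qed
  then obtain i j where ij: "i \<le> card V" "j \<le> card V" "i < j" "(f ^^ i) x = (f ^^ j) x"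
    unfolding inj_on_def by (metis atLeastAtMost_iff linorder_neqE_nat)
  define d where "d = j - i"
  have d: "d \<ge> 1" "d \<le> card V" using ij by (auto simp: d_def)
  have step: "(f ^^ (t + d)) x = (f ^^ t) x" if "t \<ge> i" for t
  proof -
    have eq1: "t + d = (t - i) + j" using that ij by (simp add: d_def)
    have eq2: "t = (t - i) + i" using that by simp
    have "(f ^^ (t + d)) x = (f ^^ (t - i)) ((f ^^ j) x)"
      by (simp only: eq1 funpow_add comp_def)
    also have "\<dots> = (f ^^ (t - i)) ((f ^^ i) x)" using ij by simp
    also have "\<dots> = (f ^^ ((t - i) + i)) x" by (simp only: funpow_add comp_def)
    also have "\<dots> = (f ^^ t) x" using eq2 by simp
    finally show ?thesis .
  qed
  have iter: "(f ^^ (t + c * d)) x = (f ^^ t) x" if "t \<ge> i" for t c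
  proof (induction c)
    case (Suc c)
    have "(f ^^ (t + Suc c * d)) x = (f ^^ ((t + c * d) + d)) x" by (simp add: algebra_simps)
    also have "\<dots> = (f ^^ (t + c * d)) x" using that by (intro step) simp
    finally show ?case using Suc by simp
  qed simp
  have "d dvd fact (card V)" using d by (intro dvd_fact) auto
  then obtain c where c: "fact (card V) = c * d" by (metis dvd_def mult.commute)
  show ?thesis using iter[of k c] k ij c by simp
qed


lemma exists_col:
  fixes E :: "(nat \<times> nat) set" and N :: nat
  assumes EV: "E \<subseteq> {1..N} \<times> {1..N}" and out: "\<forall>v\<in>{1..N}. \<exists>w. (v, w) \<in> E"
    and inn: "\<forall>w\<in>{1..N}. \<exists>v. (v, w) \<in> E"
  shows "\<exists>col. colmodel E col (fact N) (N + 1) (2 * (N + 1) + 1)"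
proof -
  define V where "V = {1..N}"
  have cV: "card V = N" "finite V" by (auto simp: V_def)
  define succ where "succ v = (SOME w. (v, w) \<in> E)" for v
  define pred where "pred w = (SOME v. (v, w) \<in> E)" for w
  have succE: "(v, succ v) \<in> E" if "v \<in> V" for v
    using out that unfolding succ_def V_def by (metis someI_ex)
  have predE: "(pred w, w) \<in> E" if "w \<in> V" for w
    using inn that unfolding pred_def V_def by (metis someI_ex)
  have EV': "\<And>a b. (a, b) \<in> E \<Longrightarrow> a \<in> V \<and> b \<in> V" using EV by (auto simp: V_def)
  have succV: "succ ` V \<subseteq> V" using succE EV' by blast
  have predV: "pred ` V \<subseteq> V" using predE EV' by blast
  have succk: "(succ ^^ k) v \<in> V" if "v \<in> V" for v k by (induction k) (use that succV in auto)
  have predk: "(pred ^^ k) v \<in> V" if "v \<in> V" for v k by (induction k) (use that predV in auto)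
  define col where "col e n = (if n \<ge> 1 then (succ ^^ nat (n - 1)) (snd e) else (pred ^^ nat (- n)) (fst e))"
    for e :: "nat \<times> nat" and n :: int
  have "colmodel E col (fact N) (N + 1) (2 * (N + 1) + 1)"
  proof
    show "0 < (fact N :: nat)" by simp
    show "finite E" by (rule finite_subset[OF EV]) simp
    show "2 * (N + 1) + 1 \<ge> 2 * (N + 1) + 1" by simp
  next
    fix e n assume e: "e \<in> E" and n: "int (N + 1) \<le> n"
    have sV: "snd e \<in> V" using EV' e by (cases e) auto
    have "n + int (fact N) - 1 = (n - 1) + int (fact N)" by simp
    then have "nat (n + int (fact N) - 1) = nat (n - 1) + nat (int (fact N))"
      using n by (simp only: nat_add_distrib[symmetric])
    then have "nat (n + int (fact N) - 1) = nat (n - 1) + fact N" by (simp only: nat_int)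
    moreover have "nat (n - 1) \<ge> card V" using n cV by simp
    moreover have "1 \<le> n + int (fact N)" using n by (simp add: add_increasing2)
    ultimately show "col e (n + int (fact N)) = col e n"
      using funpow_ev_periodic[OF cV(2) succV sV, of "nat (n - 1)"] n cV
      by (simp add: col_def)
  next
    fix e n assume e: "e \<in> E" and n: "n \<le> - int (N + 1)"
    have fV: "fst e \<in> V" using EV' e by (cases e) auto
    have "- (n - int (fact N)) = (- n) + int (fact N)" by simp
    then have "nat (- (n - int (fact N))) = nat (- n) + nat (int (fact N))"
      using n by (simp only: nat_add_distrib[symmetric])
    then have "nat (- (n - int (fact N))) = nat (- n) + fact N" by (simp only: nat_int)
    moreover have "nat (- n) \<ge> card V" using n cV by simp
    moreover have "\<not> 1 \<le> n - int (fact N)"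
    proof -
      have "(0::int) \<le> int (fact N)" by simp
      then show ?thesis using n by linarith
    qed
    ultimately show "col e (n - int (fact N)) = col e n"
      using funpow_ev_periodic[OF cV(2) predV fV, of "nat (- n)"] n cV
      by (simp add: col_def)
  next
    fix e and n :: int assume e: "e \<in> E"
    have fV: "fst e \<in> V" and sV: "snd e \<in> V" using EV' e by (cases e, auto)+
    consider "n \<ge> 1" | "n = 0" | "n \<le> -1" by linarith
    then show "(col e n, col e (n + 1)) \<in> E"
    proof cases
      case 1
      then have "nat n = Suc (nat (n - 1))" by simp
      then show ?thesis using 1 succE[OF succk[OF sV, of "nat (n - 1)"]] by (simp add: col_def)
    next
      case 2 then show ?thesis using e by (simp add: col_def)
    next
      case 3
      then have "nat (- n) = Suc (nat (- (n + 1)))" by simp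
      then show ?thesis using 3 predE[OF predk[OF fV, of "nat (- (n + 1))"]] by (simp add: col_def)
    qed
  next
    fix e assume "e \<in> E"
    show "col e 0 = fst e \<and> col e 1 = snd e" by (simp add: col_def)
  qed
  then show ?thesis by blast
qed

lemma cset_prod:
  fixes Y :: "'c::metric_space set" and K :: "'a::metric_space set"
  assumes Y: "compact Y" "countable Y" and K: "cset K"
  shows "cset (Y \<times> K)"
  unfolding cset_def
proof (intro conjI)
  show "compact (Y \<times> K)" using Y K by (auto simp: cset_def intro: compact_Times)
  show "tdisc (Y \<times> K)" unfolding tdisc_def
  proof (intro allI impI)
    fix C assume C: "C \<subseteq> Y \<times> K \<and> connected C"
    have c1: "connected (fst ` C)" using C by (intro connected_continuous_image continuous_intros) auto
    have c2: "connected (snd ` C)" using C by (intro connected_continuous_image continuous_intros) auto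
    have s1: "fst ` C \<subseteq> Y" and s2: "snd ` C \<subseteq> K" using C by auto
    have "\<exists>a. fst ` C \<subseteq> {a}"
    proof (rule ccontr)
      assume "\<not> (\<exists>a. fst ` C \<subseteq> {a})"
      then obtain a b where "a \<in> fst ` C" "b \<in> fst ` C" "a \<noteq> b" by blast
      then have "uncountable (fst ` C)" using connected_uncountable c1 by blast
      then show False using countable_subset[OF s1 Y(2)] by blast
    qed
    then obtain a where a: "fst ` C \<subseteq> {a}" by blast
    have "tdisc K" using K by (simp add: cset_def)
    then obtain b where b: "snd ` C \<subseteq> {b}" using c2 s2 unfolding tdisc_def by blast
    have "C \<subseteq> {(a, b)}"
    proof
      fix p assume "p \<in> C"
      then have "fst p = a" "snd p = b" using a b by auto
      then show "p \<in> {(a, b)}" by (cases p) simp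
    qed
    then show "\<exists>p. C \<subseteq> {p}" by blast
  qed
  show "perfect_set (Y \<times> K)" unfolding perfect_set_def
  proof
    fix p assume p: "p \<in> Y \<times> K"
    then obtain y z where yz: "p = (y, z)" "y \<in> Y" "z \<in> K" by auto
    have zl: "z islimpt K" using K yz by (auto simp: cset_def perfect_set_def)
    show "p islimpt Y \<times> K" unfolding islimpt_approachable
    proof (intro allI impI)
      fix e :: real assume e: "e > 0"
      obtain z' where z': "z' \<in> K" "z' \<noteq> z" "dist z' z < e" using zl e by (auto simp: islimpt_approachable)
      show "\<exists>x'\<in>Y \<times> K. x' \<noteq> p \<and> dist x' p < e"
        using z' yz by (intro bexI[of _ "(y, z')"]) (auto simp: dist_Pair_Pair)
    qed
  qed
qed

lemma part_clopen:
  assumes I: "finite I" and c: "\<And>i. i \<in> I \<Longrightarrow> compact (B i)"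
    and d: "\<And>i j. i \<in> I \<Longrightarrow> j \<in> I \<Longrightarrow> i \<noteq> j \<Longrightarrow> B i \<inter> B j = {}"
    and X: "X = (\<Union>i\<in>I. B i)" and i: "i \<in> I"
  shows "clopen_in X (B i)"
proof -
  have "X - B i = (\<Union>j\<in>I - {i}. B j)" using d i X by auto
  moreover have "compact (\<Union>j\<in>I - {i}. B j)" using I c by (intro compact_UN) auto
  ultimately show ?thesis using X i c by (auto simp: clopen_in_def)
qed

lemma smap_iter:
  assumes P: "P > 0" and i: "\<iota> \<in> Jset E P"
  shows "((\<lambda>p. (smap P (fst p), snd p)) ^^ n) (emb P \<iota>, z) = (emb P ((shi P ^^ n) \<iota>), z)
     \<and> (shi P ^^ n) \<iota> \<in> Jset E P"
proof (induction n)
  case (Suc n)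
  have J: "(shi P ^^ n) \<iota> \<in> Jset E P" using Suc.IH by blast
  then show ?case using Suc.IH emb_shi[OF J P] shi_J[OF P J] by simp
qed (use i in simp)

lemma smap_bij:
  assumes P: "P > 0"
  shows "smap P ` (emb P ` Jset E P) = emb P ` Jset E P" "inj_on (smap P) (emb P ` Jset E P)"
proof -
  have "smap P ` (emb P ` Jset E P) = emb P ` (shi P ` Jset E P)"
    using emb_shi[OF _ P] by (auto simp: image_image)
  then show "smap P ` (emb P ` Jset E P) = emb P ` Jset E P" using shi_surj[OF P] by simp
  show "inj_on (smap P) (emb P ` Jset E P)"
  proof (rule inj_onI)
    fix a b assume a: "a \<in> emb P ` Jset E P" and b: "b \<in> emb P ` Jset E P" and eq: "smap P a = smap P b"
    obtain ia ib where ia: "ia \<in> Jset E P" "a = emb P ia" and ib: "ib \<in> Jset E P" "b = emb P ib" using a b by auto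
    have "emb P (shi P ia) = emb P (shi P ib)" using eq ia ib emb_shi[OF _ P] by metis
    then have "shi P ia = shi P ib" using emb_inj shi_J[OF P] ia ib by (metis inj_onD)
    then have "ia = ib" using shi_inj[OF P] ia ib by (metis inj_onD)
    then show "a = b" using ia ib by simp
  qed
qed


theorem theorem4p1:
  fixes K :: "'a::metric_space set" and T :: "'a \<Rightarrow> 'a"
    and Ks :: "nat \<Rightarrow> 'a set" and N :: nat
  assumes "cantor_set K"
    and "\<exists>S. homeomorphism K K T S"
    and "N \<ge> 1"
    and "\<forall>i\<in>{1..N}. cantor_set (Ks i)"
    and "\<forall>i\<in>{1..N}. \<forall>j\<in>{1..N}. i \<noteq> j \<longrightarrow> Ks i \<inter> Ks j = {}"
    and "K = (\<Union>i\<in>{1..N}. Ks i)"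
  shows "\<exists>T'. (\<exists>S. homeomorphism K K T' S)
    \<and> (\<forall>x\<in>K. \<forall>i\<in>{1..N}. T' x \<in> Ks i \<longleftrightarrow> T x \<in> Ks i)
    \<and> (\<forall>x\<in>K. periodic_orbit T' (omega_limit_set T' x))"
proof -
  note cK0 = assms(1) and Ncs = assms(4) and Ndis = assms(5) and KU = assms(6)
  obtain Tinv where hT: "homeomorphism K K T Tinv" using assms(2) by blast
  have TK: "T ` K = K" and Tc: "continuous_on K T" using hT by (auto simp: homeomorphism_def)
  have KsK: "\<And>i. i \<in> {1..N} \<Longrightarrow> Ks i \<subseteq> K" using KU by blast
  have Ksne: "\<And>i. i \<in> {1..N} \<Longrightarrow> Ks i \<noteq> {}" using Ncs by (auto simp: cantor_set_def)
  have Kscpt: "\<And>i. i \<in> {1..N} \<Longrightarrow> compact (Ks i)" using Ncs by (auto simp: cantor_set_def)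
  have inKs: "\<And>x. x \<in> K \<Longrightarrow> \<exists>i\<in>{1..N}. x \<in> Ks i" using KU by blast
  have Ksuniq: "\<And>x i j. i \<in> {1..N} \<Longrightarrow> j \<in> {1..N} \<Longrightarrow> x \<in> Ks i \<Longrightarrow> x \<in> Ks j \<Longrightarrow> i = j"
    using Ndis by blast
  have cK: "cset K" using cK0 by (auto simp: cset_def cantor_set_def tdisc_def perfect_set_def)
  have Kne: "K \<noteq> {}" using cK0 by (simp add: cantor_set_def)
  define E where "E = {(i, j). i \<in> {1..N} \<and> j \<in> {1..N} \<and> (\<exists>x\<in>Ks i. T x \<in> Ks j)}"
  have EV: "E \<subseteq> {1..N} \<times> {1..N}" by (auto simp: E_def)
  have out: "\<forall>v\<in>{1..N}. \<exists>w. (v, w) \<in> E"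
  proof
    fix v assume v: "v \<in> {1..N}"
    then obtain x where x: "x \<in> Ks v" using Ksne by blast
    then have "T x \<in> K" using KsK[OF v] TK by blast
    then obtain w where "w \<in> {1..N}" "T x \<in> Ks w" using inKs by blast
    then show "\<exists>w. (v, w) \<in> E" using v x by (auto simp: E_def)
  qed
  have inn: "\<forall>w\<in>{1..N}. \<exists>v. (v, w) \<in> E"
  proof
    fix w assume w: "w \<in> {1..N}"
    then obtain y where y: "y \<in> Ks w" using Ksne by blast
    then have "y \<in> T ` K" using KsK[OF w] TK by blast
    then obtain x where x: "x \<in> K" "y = T x" by blast
    then obtain v where "v \<in> {1..N}" "x \<in> Ks v" using inKs by blast
    then show "\<exists>v. (v, w) \<in> E" using w x y by (auto simp: E_def)
  qed
  define P :: nat where "P = fact N"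
  define m :: nat where "m = 2 * (N + 1) + 1"
  obtain col where cm: "colmodel E col P (N + 1) m" using exists_col[OF EV out inn] unfolding P_def m_def by blast
  interpret cm: colmodel E col P "N + 1" m by (fact cm)
  have P: "P > 0" by (simp add: P_def)
  define J where "J = Jset E P"
  define Y where "Y = emb P ` J"
  define M where "M = Y \<times> K"
  define \<sigma> :: "pt \<times> 'a \<Rightarrow> pt \<times> 'a" where "\<sigma> = (\<lambda>p. (smap P (fst p), snd p))"
  define A where "A c d = {x \<in> K. x \<in> Ks c \<and> T x \<in> Ks d}" for c d
  define A' where "A' c d = emb P ` cm.Jp c d \<times> K" for c d
  define S0 where "S0 = (\<lambda>(c, d). (A c d, A' c d)) ` E"
  have cM: "cset M" unfolding M_def Y_def J_def using cm.compact_J cm.countable_J cK by (rule cset_prod)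
  have Jp_sub: "cm.Jp c d \<subseteq> J" for c d by (auto simp: cm.Jp_def J_def)
  have A_cpt: "compact (A c d)" if "(c, d) \<in> E" for c d
  proof -
    have cd: "c \<in> {1..N}" "d \<in> {1..N}" using that EV by auto
    have "closed (K \<inter> T -` Ks d)"
      using continuous_closed_preimage[OF Tc] cK0 Kscpt[OF cd(2)]
      by (simp add: cantor_set_def compact_imp_closed)
    moreover have "A c d = Ks c \<inter> (K \<inter> T -` Ks d)" using KsK[OF cd(1)] by (auto simp: A_def)
    ultimately show ?thesis using Kscpt[OF cd(1)] by (simp add: compact_Int_closed)
  qed
  have A'_cpt: "compact (A' c d)" for c d
    unfolding A'_def using cm.compact_Jp cK by (intro compact_Times) (auto simp: cset_def)
  have A_dis: "A c d \<inter> A c' d' = {}" if "(c, d) \<in> E" "(c', d') \<in> E" "(c, d) \<noteq> (c', d')" for c d c' d'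
    using that EV Ksuniq unfolding A_def by blast
  have A'_dis: "A' c d \<inter> A' c' d' = {}" if "(c, d) \<noteq> (c', d')" for c d c' d'
  proof -
    have "emb P ` cm.Jp c d \<inter> emb P ` cm.Jp c' d' = {}"
    proof (rule ccontr)
      assume "emb P ` cm.Jp c d \<inter> emb P ` cm.Jp c' d' \<noteq> {}"
      then obtain a b where ab: "a \<in> cm.Jp c d" "b \<in> cm.Jp c' d'" "emb P a = emb P b" by blast
      then have "a = b" using emb_inj[of P E] Jp_sub unfolding J_def by (meson inj_onD subsetD)
      then show False using ab that by (auto simp: cm.Jp_def)
    qed
    then show ?thesis by (auto simp: A'_def)
  qed
  have A_un: "K = (\<Union>(c, d)\<in>E. A c d)"
  proof
    show "K \<subseteq> (\<Union>(c, d)\<in>E. A c d)"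
    proof
      fix x assume x: "x \<in> K"
      obtain c where c: "c \<in> {1..N}" "x \<in> Ks c" using inKs[OF x] by blast
      obtain d where d: "d \<in> {1..N}" "T x \<in> Ks d" using inKs[of "T x"] x TK by blast
      have "(c, d) \<in> E" using c d by (auto simp: E_def)
      moreover have "x \<in> A c d" using x c d by (auto simp: A_def)
      ultimately show "x \<in> (\<Union>(c, d)\<in>E. A c d)" by blast
    qed
  qed (auto simp: A_def)
  have A'_un: "M = (\<Union>(c, d)\<in>E. A' c d)"
  proof
    show "M \<subseteq> (\<Union>(c, d)\<in>E. A' c d)"
    proof
      fix p assume "p \<in> M"
      then obtain \<iota> z where iz: "\<iota> \<in> J" "z \<in> K" "p = (emb P \<iota>, z)" by (auto simp: M_def Y_def)
      let ?c = "clr col P m \<iota>" and ?d = "clr col P m (shi P \<iota>)"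
      have "(?c, ?d) \<in> E" using cm.clr_edge iz(1) unfolding J_def by blast
      moreover have "\<iota> \<in> cm.Jp ?c ?d" using iz(1) by (simp add: cm.Jp_def J_def)
      ultimately show "p \<in> (\<Union>(c, d)\<in>E. A' c d)" using iz by (force simp: A'_def)
    qed
    show "(\<Union>(c, d)\<in>E. A' c d) \<subseteq> M" using Jp_sub by (auto simp: A'_def M_def Y_def)
  qed
  have finE: "finite E" by (rule cm.finE)
  have st: "stage K M S0" unfolding stage_def
  proof (intro conjI)
    show "finite S0" using finE by (simp add: S0_def)
    show "\<forall>p\<in>S0. fst p \<noteq> {} \<and> snd p \<noteq> {} \<and> clopen_in K (fst p) \<and> clopen_in M (snd p)"
    proof
      fix p assume "p \<in> S0"
      then obtain c d where cd: "(c, d) \<in> E" "p = (A c d, A' c d)" by (auto simp: S0_def)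
      have "A c d \<noteq> {}" using cd(1) KsK EV by (fastforce simp: E_def A_def)
      moreover have "A' c d \<noteq> {}" using cm.Jp_nonempty[OF cd(1)] Kne by (auto simp: A'_def)
      moreover have "clopen_in K (A c d)"
        using part_clopen[of E "\<lambda>(c, d). A c d" K "(c, d)"] finE A_cpt A_dis A_un cd(1) by fastforce
      moreover have "clopen_in M (A' c d)"
        using part_clopen[of E "\<lambda>(c, d). A' c d" M "(c, d)"] finE A'_cpt A'_dis A'_un cd(1) by fastforce
      ultimately show "fst p \<noteq> {} \<and> snd p \<noteq> {} \<and> clopen_in K (fst p) \<and> clopen_in M (snd p)" using cd by simp
    qed
    show "\<forall>p\<in>S0. \<forall>q\<in>S0. p \<noteq> q \<longrightarrow> fst p \<inter> fst q = {} \<and> snd p \<inter> snd q = {}"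
    proof (intro ballI impI)
      fix p q assume "p \<in> S0" "q \<in> S0" "p \<noteq> q"
      then obtain c d c' d' where cd: "(c, d) \<in> E" "p = (A c d, A' c d)" "(c', d') \<in> E" "q = (A c' d', A' c' d')"
        "(c, d) \<noteq> (c', d')" by (auto simp: S0_def)
      then show "fst p \<inter> fst q = {} \<and> snd p \<inter> snd q = {}" using A_dis A'_dis by simp
    qed
    show "\<Union>(fst ` S0) = K" using A_un by (auto simp: S0_def)
    show "\<Union>(snd ` S0) = M" using A'_un by (auto simp: S0_def)
  qed
  obtain h g where hg: "homeomorphism K M h g" and hS0: "\<forall>p\<in>S0. h ` fst p = snd p"
    using cantor_homeo_rel[OF cK cM st] by blast
  have hA: "h ` A c d = A' c d" if "(c, d) \<in> E" for c d using hS0 that by (force simp: S0_def)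
  have hM: "\<And>x. x \<in> K \<Longrightarrow> h x \<in> M" and gK: "\<And>y. y \<in> M \<Longrightarrow> g y \<in> K"
    and gh: "\<And>x. x \<in> K \<Longrightarrow> g (h x) = x" and hg': "\<And>y. y \<in> M \<Longrightarrow> h (g y) = y"
    and hc: "continuous_on K h" and gc: "continuous_on M g"
    using hg by (auto simp: homeomorphism_def)
  have gA: "g ` A' c d \<subseteq> A c d" if cdE: "(c, d) \<in> E" for c d
  proof
    fix y assume "y \<in> g ` A' c d"
    then obtain y' where y': "y' \<in> A' c d" "y = g y'" by blast
    then obtain x' where "x' \<in> A c d" "y' = h x'" using hA[OF cdE] by blast
    moreover then have "x' \<in> K" by (simp add: A_def)
    ultimately show "y \<in> A c d" using y' gh by simp
  qed
  have YY: "smap P ` Y = Y" "inj_on (smap P) Y" using smap_bij[OF P, of E] by (simp_all add: Y_def J_def)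
  have \<sigma>M: "\<sigma> ` M = M"
  proof
    show "\<sigma> ` M \<subseteq> M" using YY(1) by (auto simp: \<sigma>_def M_def)
    show "M \<subseteq> \<sigma> ` M"
    proof
      fix p assume "p \<in> M"
      then obtain y z where p: "p = (y, z)" "y \<in> Y" "z \<in> K" by (auto simp: M_def)
      then obtain y' where "y' \<in> Y" "y = smap P y'" using YY(1) by blast
      then show "p \<in> \<sigma> ` M" using p by (auto simp: \<sigma>_def M_def intro!: image_eqI[of _ _ "(y', z)"])
    qed
  qed
  have \<sigma>inj: "inj_on \<sigma> M" using YY(2) by (auto simp: \<sigma>_def M_def inj_on_def)
  have \<sigma>c: "continuous_on M \<sigma>"
    unfolding \<sigma>_def by (intro continuous_intros continuous_on_compose2[OF smap_cont[of UNIV P]]) auto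
  have cMc: "compact M" using cM by (simp add: cset_def)
  obtain \<sigma>' where h\<sigma>: "homeomorphism M M \<sigma> \<sigma>'" using homeomorphism_compact[OF cMc \<sigma>c \<sigma>M \<sigma>inj] by blast
  define T' where "T' = g \<circ> \<sigma> \<circ> h"
  have hT': "homeomorphism K K T' (g \<circ> \<sigma>' \<circ> h)"
  proof -
    have "homeomorphism K M (\<sigma> \<circ> h) (g \<circ> \<sigma>')" by (rule homeomorphism_compose[OF hg h\<sigma>])
    moreover have "homeomorphism M K g h" using hg by (rule homeomorphism_symD)
    ultimately have "homeomorphism K K (g \<circ> (\<sigma> \<circ> h)) ((g \<circ> \<sigma>') \<circ> h)"
      by (rule homeomorphism_compose)
    then show ?thesis by (simp add: T'_def comp_assoc)
  qed
  have T'c: "continuous_on K T'" and T'K: "T' ` K \<subseteq> K" using hT' by (auto simp: homeomorphism_def)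
  have T'iter: "(T' ^^ n) x = g ((\<sigma> ^^ n) (h x))" if x: "x \<in> K" for x n
  proof (induction n)
    case 0 then show ?case using gh[OF x] by simp
  next
    case (Suc n)
    have "(\<sigma> ^^ n) (h x) \<in> M"
    proof (induction n)
      case (Suc n) then show ?case using \<sigma>M by auto
    qed (use hM x in simp)
    then show ?case using Suc hg' \<sigma>M by (simp add: T'_def)
  qed
  have colour: "T' x \<in> Ks i \<longleftrightarrow> T x \<in> Ks i" if x: "x \<in> K" and i: "i \<in> {1..N}" for x i
  proof -
    obtain c where c: "c \<in> {1..N}" "x \<in> Ks c" using inKs[OF x] by blast
    obtain d where d: "d \<in> {1..N}" "T x \<in> Ks d" using inKs[of "T x"] x TK by blast
    have cd: "(c, d) \<in> E" using c d by (auto simp: E_def)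
    have "x \<in> A c d" using x c d by (auto simp: A_def)
    then have "h x \<in> A' c d" using hA[OF cd] by blast
    then obtain \<iota> z where iz: "\<iota> \<in> cm.Jp c d" "z \<in> K" "h x = (emb P \<iota>, z)" by (auto simp: A'_def)
    have iJ: "\<iota> \<in> J" and d': "clr col P m (shi P \<iota>) = d" using iz(1) by (auto simp: cm.Jp_def J_def)
    have siJ: "shi P \<iota> \<in> J" using shi_J[OF P] iJ by (simp add: J_def)
    let ?d2 = "clr col P m (shi P (shi P \<iota>))"
    have dd: "(d, ?d2) \<in> E" using cm.clr_edge[of "shi P \<iota>"] siJ d' by (simp add: J_def)
    have "shi P \<iota> \<in> cm.Jp d ?d2" using siJ d' by (simp add: cm.Jp_def J_def)
    moreover have "\<sigma> (h x) = (emb P (shi P \<iota>), z)" using iz(3) emb_shi[OF _ P] iJ by (simp add: \<sigma>_def J_def)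
    ultimately have "\<sigma> (h x) \<in> A' d ?d2" using iz(2) by (auto simp: A'_def)
    then have "T' x \<in> A d ?d2" using gA[OF dd] by (auto simp: T'_def)
    then have T'd: "T' x \<in> Ks d" by (simp add: A_def)
    show ?thesis
    proof
      assume "T' x \<in> Ks i" then have "i = d" using Ksuniq[OF i d(1)] T'd by blast
      then show "T x \<in> Ks i" using d by simp
    next
      assume "T x \<in> Ks i" then have "i = d" using Ksuniq[OF i d(1)] d by blast
      then show "T' x \<in> Ks i" using T'd by simp
    qed
  qed
  have omega: "periodic_orbit T' (omega_limit_set T' x)" if x: "x \<in> K" for x
  proof -
    obtain \<iota> z where iz: "\<iota> \<in> J" "z \<in> K" "h x = (emb P \<iota>, z)" using hM[OF x] by (auto simp: M_def Y_def)
    have siter: "(\<sigma> ^^ n) (h x) = (emb P ((shi P ^^ n) \<iota>), z)" for n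
      using smap_iter[OF P, of \<iota> E n z] iz by (simp add: \<sigma>_def J_def)
    obtain e p where ep: "\<iota> = (e, p)" by (cases \<iota>)
    have eE: "e \<in> E" using iz(1) ep by (cases p) (auto simp: J_def)
    show ?thesis
    proof (cases p)
      case (Fin n)
      define w where "w = (emb P (e, Top (nat (n mod int P))), z)"
      have rP: "nat (n mod int P) < P" using P by (simp add: nat_less_iff)
      have "(e, Top (nat (n mod int P))) \<in> J" using eE rP by (simp add: J_def)
      then have "emb P (e, Top (nat (n mod int P))) \<in> Y" unfolding Y_def by (rule imageI)
      then have wM: "w \<in> M" using iz(2) by (simp add: w_def M_def)
      have lim1: "(\<lambda>k. (\<sigma> ^^ (k * P)) (h x)) \<longlonglongrightarrow> w"
        unfolding siter ep Fin shi_funpow_Fin w_def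
        by (intro tendsto_Pair seq_top[OF P] tendsto_const)
      have inM: "(\<sigma> ^^ (k * P)) (h x) \<in> M" for k
      proof -
        have "(shi P ^^ (k * P)) \<iota> \<in> J" using smap_iter[OF P, of \<iota> E "k * P" z] iz(1) by (simp add: J_def)
        then have "emb P ((shi P ^^ (k * P)) \<iota>) \<in> Y" unfolding Y_def by (rule imageI)
        then show ?thesis using siter[of "k * P"] iz(2) by (simp add: M_def)
      qed
      have lim2: "(\<lambda>k. g ((\<sigma> ^^ (k * P)) (h x))) \<longlonglongrightarrow> g w"
        using continuous_on_tendsto_compose[OF gc lim1 wM] inM by simp
      have q: "g w \<in> K" using gK[OF wM] .
      have wper: "(\<sigma> ^^ P) w = w"
        using smap_iter[OF P, of "(e, Top (nat (n mod int P)))" E P z] eE rP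
        by (simp add: w_def \<sigma>_def shi_funpow_Top)
      have per: "(T' ^^ P) (g w) = g w" using T'iter[OF q, of P] hg'[OF wM] wper by simp
      show ?thesis
        by (rule omega_periodic[OF T'c T'K x q P per]) (use lim2 T'iter[OF x] in simp)
    next
      case (Top r)
      have rP: "r < P" using iz(1) ep Top by (simp add: J_def)
      have per: "(T' ^^ P) x = x"
        using T'iter[OF x, of P] siter[of P] iz(3) gh[OF x] ep Top rP by (simp add: shi_funpow_Top)
      have "(T' ^^ (k * P)) x = x" for k using funpow_periodic[OF per, of k 0] by simp
      then show ?thesis by (intro omega_periodic[OF T'c T'K x x P per]) simp
    next
      case (Bot r)
      have rP: "r < P" using iz(1) ep Bot by (simp add: J_def)
      have per: "(T' ^^ P) x = x"
        using T'iter[OF x, of P] siter[of P] iz(3) gh[OF x] ep Bot rP by (simp add: shi_funpow_Bot)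
      have "(T' ^^ (k * P)) x = x" for k using funpow_periodic[OF per, of k 0] by simp
      then show ?thesis by (intro omega_periodic[OF T'c T'K x x P per]) simp
    qed
  qed
  show ?thesis using hT' colour omega by blast
qed

end
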